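(* Let $p$ be a prime and let $k,A\in\mathbb{Z}$. Consider the residue classes $\bar B\in\mathbb{Z}/p^2\mathbb{Z}$ such that $p\mid \mathrm{ind}(x^3+kx^2+Ax+B)$ for the lifts $B\in\mathbb{Z}$ of $\bar B$ (with nonzero discriminant). The number of such $\bar B$ is determined by the residue classes of $k$ and $A$ in $\mathbb{Z}/p\mathbb{Z}$, and in fact equals the number of roots in $\mathbb{Z}/p\mathbb{Z}$ of $3x^2+2kx+A$.
   Context: For a monic polynomial $f\in\mathbb{Z}[x]$ with nonzero discriminant, $\mathrm{ind}(f)$ denotes the index of $\mathbb{Z}[x]/(f)$ in the ring of integral elements of $\mathbb{Q}[x]/(f)$ (its integral closure). *)

theory Defs
  imports "HOL-Computational_Algebra.Computational_Algebra" "HOL-Number_Theory.Cong"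
begin

text \<open>Elements of Q[x]/(f) are represented by rational polynomials of degree < deg f.\<close>

definition integral_in_quot :: "int poly \<Rightarrow> rat poly \<Rightarrow> bool" where
  "integral_in_quot f g \<longleftrightarrow>
     (\<exists>h :: int poly. lead_coeff h = 1 \<and> map_poly of_int f dvd pcompose (map_poly of_int h) g)"

definition int_closure :: "int poly \<Rightarrow> rat poly set" where
  "int_closure f = {g. degree g < degree f \<and> integral_in_quot f g}"

text \<open>Z[x]/(f) inside Q[x]/(f): representatives with integer coefficients.\<close>
definition int_coeffs :: "rat poly \<Rightarrow> bool" where
  "int_coeffs g \<longleftrightarrow> (\<forall>i. coeff g i \<in> \<int>)"

text \<open>ind(f): the index of Z[x]/(f) in its integral closure, i.e. the number of cosets.\<close>
definition ind :: "int poly \<Rightarrow> nat" where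
  "ind f = card ((\<lambda>g. {g' \<in> int_closure f. int_coeffs (g - g')}) ` int_closure f)"

definition cubic_disc :: "int \<Rightarrow> int \<Rightarrow> int \<Rightarrow> int" where
  "cubic_disc k A B = k^2*A^2 - 4*A^3 - 4*k^3*B - 27*B^2 + 18*k*A*B"

end

theory Submission
  imports Defs "Jordan_Normal_Form.Char_Poly"
begin



lemma alg_int_eig:
  fixes z :: "'a::field_char_0" and M :: "nat \<Rightarrow> nat \<Rightarrow> int"
  assumes n: "i0 < n" "w i0 \<noteq> 0" and eq: "\<forall>i<n. z * w i = (\<Sum>j<n. of_int (M i j) * w j)"
  shows "algebraic_int z"
proof -
  define A where "A = (mat n n (\<lambda>(i,j). M i j) :: int mat)"
  define C where "C = (map_mat of_int A :: 'a mat)"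
  define v where "v = vec n w"
  have A: "A \<in> carrier_mat n n" unfolding A_def by simp
  have C: "C \<in> carrier_mat n n" unfolding C_def using A by simp
  have "eigenvector C v z" unfolding eigenvector_def
  proof (intro conjI)
    show "v \<in> carrier_vec (dim_row C)" using C unfolding v_def by simp
    show "v \<noteq> 0\<^sub>v (dim_row C)"
    proof
      assume "v = 0\<^sub>v (dim_row C)"
      hence "v $ i0 = 0" using C n by simp
      thus False using n unfolding v_def by simp
    qed
    show "C *\<^sub>v v = z \<cdot>\<^sub>v v"
    proof (rule eq_vecI)
      show "dim_vec (C *\<^sub>v v) = dim_vec (z \<cdot>\<^sub>v v)" using C unfolding v_def by simp
      fix i assume "i < dim_vec (z \<cdot>\<^sub>v v)"
      hence i: "i < n" unfolding v_def by simp
      have "(C *\<^sub>v v) $ i = row C i \<bullet> v" using C i by simp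
      also have "\<dots> = (\<Sum>j<n. of_int (M i j) * w j)"
        unfolding scalar_prod_def v_def using C i
        by (auto simp: C_def A_def lessThan_atLeast0 intro!: sum.cong)
      also have "\<dots> = z * w i" using eq i by simp
      finally show "(C *\<^sub>v v) $ i = (z \<cdot>\<^sub>v v) $ i" using i unfolding v_def by simp
    qed
  qed
  hence "eigenvalue C z" unfolding eigenvalue_def by blast
  hence "poly (char_poly C) z = 0" using eigenvalue_root_char_poly[OF C] by simp
  moreover have "char_poly C = of_int_poly (char_poly A)"
    unfolding C_def by (rule of_int_hom.char_poly_hom[OF A])
  moreover have "monic (char_poly A)" using degree_monic_char_poly[OF A] by simp
  ultimately show ?thesis unfolding algebraic_int_altdef_ipoly by auto
qed



lemma sum_div_mod_split:
  fixes g :: "nat \<Rightarrow> nat \<Rightarrow> 'a::comm_monoid_add"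
  shows "(\<Sum>j<m*n. g (j div n) (j mod n)) = (\<Sum>a<m. \<Sum>b<n. g a b)"
proof (induction m)
  case 0 then show ?case by simp
next
  case (Suc m)
  have e: "{..<Suc m * n} = {..<m*n} \<union> {m*n..<m*n+n}" by auto
  have "(\<Sum>j<Suc m*n. g (j div n) (j mod n)) = (\<Sum>j<m*n. g (j div n) (j mod n)) + (\<Sum>j\<in>{m*n..<m*n+n}. g (j div n) (j mod n))"
    unfolding e by (rule sum.union_disjoint) auto
  also have "(\<Sum>j\<in>{m*n..<m*n+n}. g (j div n) (j mod n)) = (\<Sum>b<n. g m b)"
  proof -
    have "(\<Sum>j\<in>{m*n..<m*n+n}. g (j div n) (j mod n)) = (\<Sum>b\<in>{0..<n}. g ((b + m*n) div n) ((b+m*n) mod n))"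
      using sum.shift_bounds_nat_ivl[of "\<lambda>j. g (j div n) (j mod n)" 0 "m*n" n] by (simp add: add.commute)
    also have "\<dots> = (\<Sum>b<n. g m b)"
      by (rule sum.cong) auto
    finally show ?thesis .
  qed
  finally show ?case using Suc by simp
qed

lemma poly_monic_top:
  fixes x :: "'a::field_char_0" and P :: "int poly"
  assumes "monic P" "poly (of_int_poly P) x = 0"
  shows "x ^ degree P = - (\<Sum>a<degree P. of_int (coeff P a) * x ^ a)"
proof -
  have "0 = (\<Sum>a\<le>degree P. of_int (coeff P a) * x ^ a)"
    using assms(2) by (simp add: poly_altdef)
  also have "\<dots> = (\<Sum>a<degree P. of_int (coeff P a) * x ^ a) + x ^ degree P"
    using assms(1) by (simp add: lessThan_Suc_atMost[symmetric])
  finally show ?thesis by (simp add: eq_neg_iff_add_eq_0 add.commute)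
qed

definition mx :: "int poly \<Rightarrow> nat \<Rightarrow> nat \<Rightarrow> nat \<Rightarrow> int" where
  "mx P n i j = (if j mod n = i mod n then (if Suc (i div n) < degree P then (if j div n = Suc (i div n) then 1 else 0)
      else - coeff P (j div n)) else 0)"

definition my :: "int poly \<Rightarrow> nat \<Rightarrow> nat \<Rightarrow> nat \<Rightarrow> int" where
  "my Q n i j = (if j div n = i div n then (if Suc (i mod n) < n then (if j mod n = Suc (i mod n) then 1 else 0)
      else - coeff Q (j mod n)) else 0)"

lemma mx_eq:
  fixes x y :: "'a::field_char_0"
  assumes P: "monic P" "poly (of_int_poly P) x = 0" and n: "n > 0"
  and i: "i < degree P * n"
  shows "x * (x ^ (i div n) * y ^ (i mod n)) = (\<Sum>j<degree P * n. of_int (mx P n i j) * (x ^ (j div n) * y ^ (j mod n)))"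
proof -
  let ?m = "degree P"
  let ?a0 = "i div n" and ?b0 = "i mod n"
  have a0: "?a0 < ?m" using i n by (simp add: div_less_iff_less_mult mult.commute)
  define c where "c a = (if Suc ?a0 < ?m then (if a = Suc ?a0 then 1 else 0) else - coeff P a)" for a
  define G where "G a b = (of_int (if b = ?b0 then c a else 0) * (x ^ a * y ^ b) :: 'a)" for a b
  have "(\<Sum>j<?m * n. of_int (mx P n i j) * (x ^ (j div n) * y ^ (j mod n)))
     = (\<Sum>j<?m * n. G (j div n) (j mod n))"
    by (intro sum.cong) (auto simp: mx_def c_def G_def)
  also have "\<dots> = (\<Sum>a<?m. \<Sum>b<n. G a b)" by (rule sum_div_mod_split)
  also have "\<dots> = (\<Sum>a<?m. \<Sum>b<n. of_int (if b = ?b0 then c a else 0) * (x ^ a * y ^ b) :: 'a)"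
    unfolding G_def ..
  also have "\<dots> = (\<Sum>a<?m. of_int (c a) * (x ^ a * y ^ ?b0))"
  proof (rule sum.cong)
    fix a
    have "(\<Sum>b<n. of_int (if b = ?b0 then c a else 0) * (x ^ a * y ^ b) :: 'a) = (\<Sum>b<n. if b = ?b0 then of_int (c a) * (x ^ a * y ^ b) else 0)"
      by (intro sum.cong) auto
    also have "\<dots> = of_int (c a) * (x ^ a * y ^ ?b0)" using n by (simp add: sum.delta)
    finally show "(\<Sum>b<n. of_int (if b = ?b0 then c a else 0) * (x ^ a * y ^ b) :: 'a) = of_int (c a) * (x ^ a * y ^ ?b0)" .
  qed simp
  also have "\<dots> = x * (x ^ ?a0 * y ^ ?b0)"
  proof (cases "Suc ?a0 < ?m")
    case True
    hence "(\<Sum>a<?m. of_int (c a) * (x ^ a * y ^ ?b0)) = (\<Sum>a<?m. if a = Suc ?a0 then x ^ a * y ^ ?b0 else 0)"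
      unfolding c_def by (intro sum.cong) auto
    also have "\<dots> = x ^ Suc ?a0 * y ^ ?b0" using True by simp
    finally show ?thesis by simp
  next
    case False
    hence m: "?m = Suc ?a0" using a0 by simp
    have "(\<Sum>a<?m. of_int (c a) * (x ^ a * y ^ ?b0)) = - (\<Sum>a<?m. of_int (coeff P a) * x ^ a) * y ^ ?b0"
      unfolding c_def using False by (simp add: sum_distrib_right sum_negf mult.assoc)
    also have "\<dots> = x ^ ?m * y ^ ?b0" using poly_monic_top[OF P] by simp
    finally show ?thesis using m by simp
  qed
  finally show ?thesis by simp
qed



lemma my_eq:
  fixes x y :: "'a::field_char_0"
  assumes Q: "monic Q" "poly (of_int_poly Q) y = 0" and n: "n = degree Q" "n > 0"
  and i: "i < m * n"
  shows "y * (x ^ (i div n) * y ^ (i mod n)) = (\<Sum>j<m * n. of_int (my Q n i j) * (x ^ (j div n) * y ^ (j mod n)))"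
proof -
  let ?a0 = "i div n" and ?b0 = "i mod n"
  have a0: "?a0 < m" using i n by (simp add: div_less_iff_less_mult mult.commute)
  have b0: "?b0 < n" using n by simp
  define c where "c b = (if Suc ?b0 < n then (if b = Suc ?b0 then 1 else 0) else - coeff Q b)" for b
  define G where "G a b = (of_int (if a = ?a0 then c b else 0) * (x ^ a * y ^ b) :: 'a)" for a b
  have "(\<Sum>j<m * n. of_int (my Q n i j) * (x ^ (j div n) * y ^ (j mod n)))
     = (\<Sum>j<m * n. G (j div n) (j mod n))"
    by (intro sum.cong) (auto simp: my_def c_def G_def)
  also have "\<dots> = (\<Sum>a<m. \<Sum>b<n. G a b)" by (rule sum_div_mod_split)
  also have "\<dots> = (\<Sum>a<m. if a = ?a0 then (\<Sum>b<n. of_int (c b) * (x ^ a * y ^ b)) else 0)"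
    by (intro sum.cong) (auto simp: G_def)
  also have "\<dots> = (\<Sum>b<n. of_int (c b) * (x ^ ?a0 * y ^ b))" using a0 by (simp add: sum.delta)
  also have "\<dots> = y * (x ^ ?a0 * y ^ ?b0)"
  proof (cases "Suc ?b0 < n")
    case True
    hence "(\<Sum>b<n. of_int (c b) * (x ^ ?a0 * y ^ b)) = (\<Sum>b<n. if b = Suc ?b0 then x ^ ?a0 * y ^ b else 0)"
      unfolding c_def by (intro sum.cong) auto
    also have "\<dots> = x ^ ?a0 * y ^ Suc ?b0" using True by simp
    finally show ?thesis by simp
  next
    case False
    hence m: "n = Suc ?b0" using b0 by simp
    have "(\<Sum>b<n. of_int (c b) * (x ^ ?a0 * y ^ b)) = - (\<Sum>b<n. of_int (coeff Q b) * y ^ b) * x ^ ?a0"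
      unfolding c_def using False by (simp add: sum_distrib_right sum_distrib_left sum_negf mult_ac)
    also have "\<dots> = y ^ n * x ^ ?a0" using poly_monic_top[OF Q] n by simp
    finally have "(\<Sum>b<n. of_int (c b) * (x ^ ?a0 * y ^ b)) = y ^ n * x ^ ?a0" .
    moreover have "y ^ n = y * y ^ ?b0" using m by (metis power_Suc)
    ultimately show ?thesis by (simp add: mult_ac)
  qed
  finally show ?thesis by simp
qed

lemma alg_int_poly_data:
  assumes "algebraic_int (x::'a::field_char_0)"
  obtains P where "monic P" "poly (of_int_poly P) x = 0" "degree P > 0"
proof -
  from assms obtain P where P: "poly (of_int_poly P) x = 0" "monic P"
    unfolding algebraic_int_altdef_ipoly by auto
  have "degree P > 0"
  proof (rule ccontr)
    assume "\<not> degree P > 0"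
    hence "P = 1" using P(2) monic_degree_0 by blast
    thus False using P(1) by simp
  qed
  thus ?thesis using that P by blast
qed

lemma alg_int_add_mult:
  fixes x y :: "'a::field_char_0"
  assumes x: "algebraic_int x" and y: "algebraic_int y"
  shows "algebraic_int (x + y)" "algebraic_int (x * y)"
proof -
  obtain P where P: "monic P" "poly (of_int_poly P) x = 0" "degree P > 0" using alg_int_poly_data[OF x] .
  obtain Q where Q: "monic Q" "poly (of_int_poly Q) y = 0" "degree Q > 0" using alg_int_poly_data[OF y] .
  define m where "m = degree P"
  define n where "n = degree Q"
  define w where "w i = x ^ (i div n) * y ^ (i mod n)" for i
  have mn: "0 < m * n" using P Q unfolding m_def n_def by simp
  have w0: "w 0 \<noteq> 0" unfolding w_def by simp
  have X: "\<forall>i<m*n. x * w i = (\<Sum>j<m*n. of_int (mx P n i j) * w j)"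
    using mx_eq[OF P(1,2), of n] Q unfolding w_def m_def n_def by auto
  have Y: "\<forall>i<m*n. y * w i = (\<Sum>j<m*n. of_int (my Q n i j) * w j)"
    using my_eq[OF Q(1,2), of n] Q unfolding w_def m_def n_def by auto
  show "algebraic_int (x + y)"
  proof (rule alg_int_eig[of 0 "m*n" w, OF mn w0])
    show "\<forall>i<m * n. (x + y) * w i = (\<Sum>j<m * n. of_int (mx P n i j + my Q n i j) * w j)"
      using X Y by (simp add: distrib_right sum.distrib)
  qed
  show "algebraic_int (x * y)"
  proof (rule alg_int_eig[of 0 "m*n" w, OF mn w0])
    show "\<forall>i<m * n. (x * y) * w i = (\<Sum>j<m * n. of_int (\<Sum>l<m*n. mx P n i l * my Q n l j) * w j)"
    proof (intro allI impI)
      fix i assume i: "i < m * n"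
      have "(\<Sum>j<m * n. of_int (\<Sum>l<m*n. mx P n i l * my Q n l j) * w j)
          = (\<Sum>j<m * n. \<Sum>l<m*n. of_int (mx P n i l) * (of_int (my Q n l j) * w j))"
        by (simp add: sum_distrib_right mult.assoc)
      also have "\<dots> = (\<Sum>l<m * n. of_int (mx P n i l) * (\<Sum>j<m*n. of_int (my Q n l j) * w j))"
        by (subst sum.swap) (simp add: sum_distrib_left)
      also have "\<dots> = (\<Sum>l<m * n. of_int (mx P n i l) * (y * w l))"
        using Y by simp
      also have "\<dots> = y * (x * w i)" using X i by (simp add: sum_distrib_left mult_ac)
      finally show "(x * y) * w i = (\<Sum>j<m * n. of_int (\<Sum>l<m*n. mx P n i l * my Q n l j) * w j)"
        by (simp add: mult_ac)
    qed
  qed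
qed

lemma alg_int_add: "algebraic_int (x::'a::field_char_0) \<Longrightarrow> algebraic_int y \<Longrightarrow> algebraic_int (x + y)"
  and alg_int_mult: "algebraic_int (x::'a::field_char_0) \<Longrightarrow> algebraic_int y \<Longrightarrow> algebraic_int (x * y)"
  using alg_int_add_mult by blast+

lemma alg_int_diff: "algebraic_int (x::'a::field_char_0) \<Longrightarrow> algebraic_int y \<Longrightarrow> algebraic_int (x - y)"
  using alg_int_add[of x "-y"] by simp

lemma alg_int_power: "algebraic_int (x::'a::field_char_0) \<Longrightarrow> algebraic_int (x ^ n)"
  by (induction n) (auto intro: alg_int_mult)

lemma alg_int_sum: "(\<And>i. i \<in> S \<Longrightarrow> algebraic_int (f i :: 'a::field_char_0)) \<Longrightarrow> algebraic_int (sum f S)"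
  by (induction S rule: infinite_finite_induct) (auto intro: alg_int_add)




definition cub :: "int \<Rightarrow> int \<Rightarrow> int \<Rightarrow> int poly" where
  "cub k A B = [:B, A, k, 1:]"

lemma cubic_split:
  obtains a1 a2 a3 :: complex where
    "of_int_poly (cub k A B) = [:-a1,1:]*[:-a2,1:]*[:-a3,1:]"
    "of_int k = -(a1+a2+a3)" "of_int A = a1*a2+a1*a3+a2*a3" "of_int B = -(a1*a2*a3)"
proof -
  let ?f = "of_int_poly (cub k A B) :: complex poly"
  have d: "degree ?f = 3" "coeff ?f 3 = 1" by (simp_all add: cub_def eval_nat_numeral)
  from fundamental_theorem_algebra_factorized[of ?f] obtain as where
    as: "Polynomial.smult (coeff ?f (degree ?f)) (\<Prod>a\<leftarrow>as. [:- a, 1:]) = ?f" "length as = degree ?f" by blast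
  have "length as = 3" using as(2) d by simp
  then obtain a1 a2 a3 where "as = [a1,a2,a3]"
    by (auto simp: numeral_3_eq_3 length_Suc_conv)
  have lc: "coeff ?f (degree ?f) = 1" using d by simp
  from as(1) have e0: "(\<Prod>a\<leftarrow>as. [:- a, 1:]) = ?f" unfolding lc by simp
  with \<open>as = [a1,a2,a3]\<close> have "?f = [:-a1,1:]*([:-a2,1:]*[:-a3,1:])"
    by (simp only: list.map prod_list.Cons prod_list.Nil mult_1_right)
  hence e: "?f = [:-a1,1:]*[:-a2,1:]*[:-a3,1:]" by (simp only: mult.assoc)
  have "[:of_int B, of_int A, of_int k, 1:] = ([:-a1,1:]*[:-a2,1:]*[:-a3,1:] :: complex poly)"
    using e by (simp add: cub_def)
  hence "of_int B = -(a1*a2*a3) \<and> of_int A = a1*a2+a1*a3+a2*a3 \<and> of_int k = -(a1+a2+a3)"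
    by (simp add: algebra_simps)
  thus ?thesis using that e by blast
qed

lemma disc_vieta:
  fixes a1 a2 a3 :: complex
  assumes "of_int k = -(a1+a2+a3)" "of_int A = a1*a2+a1*a3+a2*a3" "of_int B = -(a1*a2*a3)"
  shows "of_int (cubic_disc k A B) = ((a1-a2)*(a1-a3)*(a2-a3))^2"
proof -
  have "of_int (cubic_disc k A B) = (of_int k)^2*(of_int A)^2 - 4*(of_int A)^3 - 4*(of_int k)^3*(of_int B) - 27*(of_int B)^2 + 18*(of_int k)*(of_int A)*(of_int B :: complex)"
    by (simp add: cubic_disc_def)
  also have "\<dots> = ((a1-a2)*(a1-a3)*(a2-a3))^2" unfolding assms by (simp add: power2_eq_square power3_eq_cube ring_distribs mult_ac)
  finally show ?thesis .
qed



definition ev :: "rat poly \<Rightarrow> complex \<Rightarrow> complex" where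
  "ev g a = poly (map_poly of_rat g) a"

lemma three_roots_dvd:
  fixes G :: "complex poly"
  assumes "poly G a1 = 0" "poly G a2 = 0" "poly G a3 = 0" "a1 \<noteq> a2" "a1 \<noteq> a3" "a2 \<noteq> a3"
  shows "[:-a1,1:]*[:-a2,1:]*[:-a3,1:] dvd G"
proof -
  obtain G1 where G1: "G = [:-a1,1:] * G1" using assms(1) poly_eq_0_iff_dvd by (metis dvdE)
  have "poly G1 a2 = 0" using assms(2,4) G1 by simp
  then obtain G2 where G2: "G1 = [:-a2,1:] * G2" using poly_eq_0_iff_dvd by (metis dvdE)
  have "poly G2 a3 = 0" using assms(3,5,6) G1 G2 by simp
  then obtain G3 where G3: "G2 = [:-a3,1:] * G3" using poly_eq_0_iff_dvd by (metis dvdE)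
  have "G = ([:-a1,1:]*[:-a2,1:]*[:-a3,1:]) * G3" using G1 G2 G3 by (simp only: mult.assoc)
  thus ?thesis by (rule dvdI)
qed

lemma of_rat_of_int_poly: "map_poly of_rat (of_int_poly f :: rat poly) = (of_int_poly f :: complex poly)"
  by (simp add: map_poly_map_poly o_def)

lemma ev_pcompose: "ev (of_int_poly h \<circ>\<^sub>p g) a = poly (of_int_poly h) (ev g a)"
  unfolding ev_def of_rat_hom.map_poly_pcompose of_rat_of_int_poly by (simp add: poly_pcompose)

lemma map_rat_mult: "map_poly (of_rat::rat\<Rightarrow>complex) (p*q) = map_poly of_rat p * map_poly of_rat q"
  by (induct p) (auto simp: hom_distribs)

lemma poly_three: "poly ([:-a1,1:]*[:-a2,1:]*[:-a3,1:]) a = (a-a1)*(a-a2)*((a::complex)-a3)"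
  unfolding poly_mult by simp

lemma rat_dvd_ev0:
  assumes "(of_int_poly f :: rat poly) dvd G" "poly (of_int_poly f :: complex poly) a = 0"
  shows "ev G a = 0"
proof -
  interpret rq: map_poly_inj_idom_hom "of_rat :: rat \<Rightarrow> complex" ..
  from assms(1) obtain q where "G = of_int_poly f * q" by (rule dvdE)
  hence "(map_poly of_rat G :: complex poly) = map_poly of_rat (of_int_poly f :: rat poly) * map_poly of_rat q"
    by (simp add: map_rat_mult)
  thus ?thesis using assms(2) unfolding ev_def of_rat_of_int_poly by simp
qed

lemma complex_dvd_rat:
  assumes "(of_int_poly f :: complex poly) dvd map_poly of_rat G"
  shows "(of_int_poly f :: rat poly) dvd G"
proof -
  interpret rq: map_poly_inj_idom_hom "of_rat :: rat \<Rightarrow> complex" ..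
  have "map_poly of_rat (G mod of_int_poly f) = map_poly of_rat G mod (of_int_poly f :: complex poly)"
    by (simp add: of_rat_hom.map_poly_mod of_rat_of_int_poly)
  also have "\<dots> = 0" using assms by simp
  finally have "G mod of_int_poly f = 0" by simp
  thus ?thesis by (simp add: mod_eq_0_iff_dvd)
qed

lemma int_quot_iff:
  assumes split: "of_int_poly (cub k A B) = [:-a1,1:]*[:-a2,1:]*[:-a3,1:]"
    and dist: "a1 \<noteq> a2" "a1 \<noteq> a3" "a2 \<noteq> a3"
  shows "integral_in_quot (cub k A B) g \<longleftrightarrow> (\<forall>a\<in>{a1,a2,a3}. algebraic_int (ev g a))"
proof
  assume "integral_in_quot (cub k A B) g"
  then obtain h where h: "monic h" "of_int_poly (cub k A B) dvd (of_int_poly h \<circ>\<^sub>p g :: rat poly)"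
    unfolding integral_in_quot_def by auto
  show "\<forall>a\<in>{a1,a2,a3}. algebraic_int (ev g a)"
  proof
    fix a assume a: "a \<in> {a1,a2,a3}"
    have "poly (of_int_poly (cub k A B) :: complex poly) a = 0" using a unfolding split poly_three by auto
    from rat_dvd_ev0[OF h(2) this] have "poly (of_int_poly h) (ev g a) = 0" by (simp add: ev_pcompose)
    thus "algebraic_int (ev g a)" unfolding algebraic_int_altdef_ipoly using h(1) by blast
  qed
next
  assume all: "\<forall>a\<in>{a1,a2,a3}. algebraic_int (ev g a)"
  have "\<exists>h. monic h \<and> poly (of_int_poly h) (ev g a) = 0" if "a \<in> {a1,a2,a3}" for a
    using all that unfolding algebraic_int_altdef_ipoly by blast
  then obtain h1 h2 h3 where h1: "monic h1" "poly (of_int_poly h1) (ev g a1) = 0"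
    and h2: "monic h2" "poly (of_int_poly h2) (ev g a2) = 0"
    and h3: "monic h3" "poly (of_int_poly h3) (ev g a3) = 0" by (metis insertCI)
  define H where "H = h1 * h2 * h3"
  have mH: "monic H" unfolding H_def using h1 h2 h3 by (simp add: monic_mult)
  have "poly (of_int_poly H) (ev g a) = 0" if "a \<in> {a1,a2,a3}" for a
    using that h1 h2 h3 unfolding H_def by (auto simp: of_int_poly_hom.hom_mult)
  hence "poly (map_poly of_rat (of_int_poly H \<circ>\<^sub>p g)) a = 0" if "a \<in> {a1,a2,a3}" for a
    using that ev_pcompose unfolding ev_def by metis
  hence "[:-a1,1:]*[:-a2,1:]*[:-a3,1:] dvd map_poly of_rat (of_int_poly H \<circ>\<^sub>p g)"
    using three_roots_dvd dist by blast
  hence "of_int_poly (cub k A B) dvd (of_int_poly H \<circ>\<^sub>p g :: rat poly)"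
    using complex_dvd_rat split by metis
  thus "integral_in_quot (cub k A B) g" unfolding integral_in_quot_def using mH by blast
qed




definition cs :: "'a::ab_group_add set \<Rightarrow> 'a \<Rightarrow> 'a set" where
  "cs K x = (\<lambda>z. x + z) ` K"

definition subgrp :: "'a::ab_group_add set \<Rightarrow> bool" where
  "subgrp K \<longleftrightarrow> 0 \<in> K \<and> (\<forall>x\<in>K. \<forall>y\<in>K. x - y \<in> K)"

lemma subgrpD:
  assumes "subgrp K"
  shows "0 \<in> K" "x \<in> K \<Longrightarrow> y \<in> K \<Longrightarrow> x - y \<in> K" "x \<in> K \<Longrightarrow> -x \<in> K"
    "x \<in> K \<Longrightarrow> y \<in> K \<Longrightarrow> x + y \<in> K"
proof -
  show "0 \<in> K" using assms unfolding subgrp_def by auto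
  show "x \<in> K \<Longrightarrow> y \<in> K \<Longrightarrow> x - y \<in> K" using assms unfolding subgrp_def by auto
  show n: "x \<in> K \<Longrightarrow> -x \<in> K" for x using assms unfolding subgrp_def by (metis diff_0)
  show "x \<in> K \<Longrightarrow> y \<in> K \<Longrightarrow> x + y \<in> K" using assms n[of y] unfolding subgrp_def
    by (metis diff_minus_eq_add)
qed

lemma cs_eq_iff:
  assumes "subgrp K"
  shows "cs K x = cs K y \<longleftrightarrow> x - y \<in> K"
proof
  assume e: "cs K x = cs K y"
  have "x \<in> cs K x" unfolding cs_def using subgrpD(1)[OF assms] by force
  hence "x \<in> cs K y" using e by simp
  then obtain z where "z \<in> K" "x = y + z" unfolding cs_def by auto
  thus "x - y \<in> K" by simp
next
  assume d: "x - y \<in> K"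
  show "cs K x = cs K y"
  proof
    show "cs K x \<subseteq> cs K y"
    proof
      fix u assume "u \<in> cs K x"
      then obtain z where z: "z \<in> K" "u = x + z" unfolding cs_def by auto
      have "(x - y) + z \<in> K" using subgrpD(4)[OF assms d z(1)] .
      moreover have "u = y + ((x - y) + z)" using z by simp
      ultimately show "u \<in> cs K y" unfolding cs_def by blast
    qed
  next
    show "cs K y \<subseteq> cs K x"
    proof
      fix u assume "u \<in> cs K y"
      then obtain z where z: "z \<in> K" "u = y + z" unfolding cs_def by auto
      have "z - (x - y) \<in> K" using subgrpD(2)[OF assms z(1) d] .
      moreover have "u = x + (z - (x - y))" using z by simp
      ultimately show "u \<in> cs K x" unfolding cs_def by blast
    qed
  qed
qed

lemma cs_translate: "(\<lambda>u. u + x) ` cs K y = cs K (y + x)"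
  unfolding cs_def image_image by (intro image_cong) (auto simp: ac_simps)

lemma lagrange_generic:
  fixes K H G :: "'a::ab_group_add set"
  assumes K: "subgrp K" and H: "subgrp H" and G: "subgrp G"
    and KH: "K \<subseteq> H" and HG: "H \<subseteq> G" and fin: "finite (cs K ` G)"
  shows "card (cs K ` H) dvd card (cs K ` G)"
proof -
  define blk where "blk x = cs K ` {y. y - x \<in> H}" for x
  define P where "P = blk ` G"
  have blk_alt: "blk x = (\<lambda>C. (\<lambda>u. u + x) ` C) ` (cs K ` H)" for x
  proof -
    have "{y. y - x \<in> H} = (\<lambda>h. h + x) ` H" by (auto simp: image_iff) (metis diff_add_cancel)
    hence "blk x = cs K ` ((\<lambda>h. h + x) ` H)" unfolding blk_def by simp
    also have "\<dots> = (\<lambda>C. (\<lambda>u. u + x) ` C) ` (cs K ` H)"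
      unfolding image_image cs_translate by simp
    finally show ?thesis .
  qed
  have card_blk: "card (blk x) = card (cs K ` H)" for x
  proof -
    have "inj_on (\<lambda>C. (\<lambda>u. u + x) ` C) (cs K ` H)"
    proof (rule inj_onI)
      fix C D assume "(\<lambda>u. u + x) ` C = (\<lambda>u. u + x) ` D"
      hence "(\<lambda>u. u - x) ` ((\<lambda>u. u + x) ` C) = (\<lambda>u. u - x) ` ((\<lambda>u. u + x) ` D)" by simp
      thus "C = D" by (simp add: image_image)
    qed
    thus ?thesis unfolding blk_alt by (rule card_image)
  qed
  have blk_sub: "blk x \<subseteq> cs K ` G" if "x \<in> G" for x
  proof
    fix C assume "C \<in> blk x"
    then obtain y where y: "y - x \<in> H" "C = cs K y" unfolding blk_def by auto
    have "y - x \<in> G" using y HG by auto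
    hence "(y - x) + x \<in> G" using subgrpD(4)[OF G _ that] by blast
    thus "C \<in> cs K ` G" using y by simp
  qed
  have union: "\<Union>P = cs K ` G"
  proof
    show "\<Union>P \<subseteq> cs K ` G" unfolding P_def using blk_sub by auto
    show "cs K ` G \<subseteq> \<Union>P"
    proof
      fix C assume "C \<in> cs K ` G"
      then obtain x where "x \<in> G" "C = cs K x" by auto
      moreover have "C \<in> blk x" unfolding blk_def using subgrpD(1)[OF H] \<open>C = cs K x\<close> by auto
      ultimately show "C \<in> \<Union>P" unfolding P_def by auto
    qed
  qed
  have disj: "c1 \<inter> c2 = {}" if c12: "c1 \<in> P" "c2 \<in> P" "c1 \<noteq> c2" for c1 c2
  proof (rule ccontr)
    assume "c1 \<inter> c2 \<noteq> {}"
    obtain x1 x2 where x: "c1 = blk x1" "c2 = blk x2" using c12 unfolding P_def by auto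
    from \<open>c1 \<inter> c2 \<noteq> {}\<close> obtain C where "C \<in> blk x1" "C \<in> blk x2" using x by auto
    then obtain y1 y2 where y: "y1 - x1 \<in> H" "y2 - x2 \<in> H" "cs K y1 = cs K y2" unfolding blk_def by auto
    have "y1 - y2 \<in> H" using y(3) cs_eq_iff[OF K] KH by auto
    have "x1 - x2 = (y1 - y2) - (y1 - x1) + (y2 - x2)" by simp
    also have "\<dots> \<in> H" using subgrpD(2,4)[OF H] \<open>y1 - y2 \<in> H\<close> y(1,2) by blast
    finally have d: "x1 - x2 \<in> H" .
    have "{y. y - x1 \<in> H} = {y. y - x2 \<in> H}"
    proof (auto)
      fix y assume "y - x1 \<in> H"
      hence "(y - x1) + (x1 - x2) \<in> H" using subgrpD(4)[OF H] d by blast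
      thus "y - x2 \<in> H" by simp
    next
      fix y assume "y - x2 \<in> H"
      hence "(y - x2) - (x1 - x2) \<in> H" using subgrpD(2)[OF H] d by blast
      thus "y - x1 \<in> H" by simp
    qed
    hence "c1 = c2" using x unfolding blk_def by simp
    thus False using c12 by simp
  qed
  have finP: "finite P" unfolding P_def
    by (rule finite_subset[OF _ finite_Pow_iff[THEN iffD2, OF fin]]) (use blk_sub in auto)
  have "card (cs K ` H) * card P = card (\<Union>P)"
    by (rule card_partition[OF finP]) (use union fin card_blk disj P_def in auto)
  thus ?thesis unfolding union by (metis dvd_triv_left)
qed



lemma poly3_eq:
  assumes "degree (g::'a::zero poly) < 3"
  shows "g = [:coeff g 0, coeff g 1, coeff g 2:]"
proof (rule poly_eqI)
  fix n show "coeff g n = coeff [:coeff g 0, coeff g 1, coeff g 2:] n"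
  proof (cases "n < 3")
    case True
    hence "n = 0 \<or> n = 1 \<or> n = 2" by auto
    thus ?thesis by (auto simp: numeral_2_eq_2)
  next
    case False
    hence "coeff g n = 0" using assms by (intro coeff_eq_0) simp
    moreover have "coeff [:coeff g 0, coeff g 1, coeff g 2:] n = 0"
      using False by (intro coeff_eq_0) (auto intro: le_less_trans[OF degree_pCons_le])
    ultimately show ?thesis by simp
  qed
qed

lemma ev3:
  assumes "degree g < 3"
  shows "ev g a = of_rat (coeff g 0) + of_rat (coeff g 1) * a + of_rat (coeff g 2) * a^2"
proof -
  have "ev g a = ev [:coeff g 0, coeff g 1, coeff g 2:] a" using poly3_eq[OF assms] by metis
  also have "\<dots> = of_rat (coeff g 0) + of_rat (coeff g 1) * a + of_rat (coeff g 2) * a^2"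
    unfolding ev_def by (simp add: hom_distribs algebra_simps power2_eq_square)
  finally show ?thesis .
qed

lemma ev_add: "ev (g + h) a = ev g a + ev h a"
  unfolding ev_def by (simp add: of_rat_hom.map_poly_hom_add)
lemma map_rat_diff: "map_poly (of_rat::rat\<Rightarrow>complex) (g - h) = map_poly of_rat g - map_poly of_rat h"
  by (rule poly_eqI) (simp add: coeff_map_poly of_rat_diff)
lemma ev_diff: "ev (g - h) a = ev g a - ev h a"
  unfolding ev_def by (simp add: map_rat_diff)

lemma deg_lt_diff: "degree (x::'a::ab_group_add poly) < n \<Longrightarrow> degree y < n \<Longrightarrow> degree (x - y) < n"
  by (meson degree_diff_le_max max_less_iff_conj le_less_trans)
lemma deg_lt_add: "degree (x::'a::comm_monoid_add poly) < n \<Longrightarrow> degree y < n \<Longrightarrow> degree (x + y) < n"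
  by (meson degree_add_le_max max_less_iff_conj le_less_trans)
lemma ev_smult: "ev (Polynomial.smult c g) a = of_rat c * ev g a"
  unfolding ev_def by (simp add: of_rat_hom.map_poly_hom_smult)
lemma ev_mult: "ev (g * h) a = ev g a * ev h a"
  unfolding ev_def by (simp add: map_rat_mult)

lemma rat_in_Ints_of_rat: "(of_rat r :: complex) \<in> \<int> \<Longrightarrow> r \<in> \<int>"
  by (metis Ints_cases Ints_of_int of_rat_eq_iff of_rat_of_int_eq)

definition Kz :: "rat poly set" where "Kz = {g. degree g < 3 \<and> int_coeffs g}"

lemma int_coeffs_diff: "int_coeffs g \<Longrightarrow> int_coeffs h \<Longrightarrow> int_coeffs (g - h)"
  unfolding int_coeffs_def by auto

lemma subgrp_Kz: "subgrp Kz"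
  unfolding subgrp_def Kz_def int_coeffs_def
  by (auto intro: deg_lt_diff)

locale cubic =
  fixes k A B :: int and a1 a2 a3 :: complex
  assumes split: "of_int_poly (cub k A B) = [:-a1,1:]*[:-a2,1:]*[:-a3,1:]"
    and vk: "of_int k = -(a1+a2+a3)" and vA: "of_int A = a1*a2+a1*a3+a2*a3"
    and vB: "of_int B = -(a1*a2*a3)"
    and dist: "a1 \<noteq> a2" "a1 \<noteq> a3" "a2 \<noteq> a3"
begin

definition inO :: "rat poly \<Rightarrow> bool" where
  "inO g \<longleftrightarrow> (\<forall>a\<in>{a1,a2,a3}. algebraic_int (ev g a))"

definition Ocl :: "rat poly set" where "Ocl = {g. degree g < 3 \<and> inO g}"

lemma roots_alg_int: "a \<in> {a1,a2,a3} \<Longrightarrow> algebraic_int a"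
proof -
  assume a: "a \<in> {a1,a2,a3}"
  have "poly (of_int_poly (cub k A B) :: complex poly) a = 0" using a unfolding split poly_three by auto
  moreover have "monic (cub k A B)" by (simp add: cub_def)
  ultimately show ?thesis unfolding algebraic_int_altdef_ipoly by blast
qed

lemma root_eq: "a \<in> {a1,a2,a3} \<Longrightarrow> a^3 + of_int k * a^2 + of_int A * a + of_int B = 0"
proof -
  assume a: "a \<in> {a1,a2,a3}"
  have "poly (of_int_poly (cub k A B) :: complex poly) a = 0" using a unfolding split poly_three by auto
  thus ?thesis by (simp add: cub_def algebra_simps power2_eq_square power3_eq_cube)
qed

lemma int_coeffs_inO: "int_coeffs g \<Longrightarrow> inO g"
proof -
  assume g: "int_coeffs g"
  show "inO g" unfolding inO_def
  proof
    fix a assume a: "a \<in> {a1,a2,a3}"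
    have "ev g a = (\<Sum>i\<le>degree g. of_rat (coeff g i) * a ^ i)"
      unfolding ev_def by (simp add: poly_altdef degree_map_poly)
    also have "algebraic_int \<dots>"
    proof (rule alg_int_sum)
      fix i
      from g obtain n where "coeff g i = of_int n" unfolding int_coeffs_def by (meson Ints_cases)
      thus "algebraic_int (of_rat (coeff g i) * a ^ i)"
        using roots_alg_int[OF a] by (auto intro!: alg_int_mult alg_int_power)
    qed
    finally show "algebraic_int (ev g a)" .
  qed
qed

lemma inO_add: "inO g \<Longrightarrow> inO h \<Longrightarrow> inO (g + h)"
  unfolding inO_def ev_add by (auto intro: alg_int_add)
lemma inO_diff: "inO g \<Longrightarrow> inO h \<Longrightarrow> inO (g - h)"
  unfolding inO_def ev_diff by (auto intro: alg_int_diff)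
lemma inO_mult: "inO g \<Longrightarrow> inO h \<Longrightarrow> inO (g * h)"
  unfolding inO_def ev_mult by (auto intro: alg_int_mult)
lemma inO_smult_int: "inO g \<Longrightarrow> inO (Polynomial.smult (of_int n) g)"
  unfolding inO_def ev_smult by (auto intro: alg_int_mult)

lemma subgrp_Ocl: "subgrp Ocl"
  unfolding subgrp_def Ocl_def
  by (auto intro: deg_lt_diff inO_diff int_coeffs_inO simp: int_coeffs_def)

lemma Kz_Ocl: "Kz \<subseteq> Ocl"
  unfolding Kz_def Ocl_def using int_coeffs_inO by auto

lemma int_closure_eq: "int_closure [:B, A, k, 1:] = Ocl"
proof -
  have "degree [:B, A, k, 1:] = 3" by (simp add: eval_nat_numeral)
  moreover have "integral_in_quot [:B, A, k, 1:] g \<longleftrightarrow> inO g" for g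
    using int_quot_iff[OF split dist] unfolding inO_def cub_def .
  ultimately show ?thesis unfolding int_closure_def Ocl_def by auto
qed

lemma ind_eq: "ind [:B, A, k, 1:] = card (cs Kz ` Ocl)"
proof -
  have "(\<lambda>g. {g' \<in> Ocl. int_coeffs (g - g')}) ` Ocl = cs Kz ` Ocl"
  proof (rule image_cong[OF refl])
    fix g assume g: "g \<in> Ocl"
    show "{g' \<in> Ocl. int_coeffs (g - g')} = cs Kz g"
    proof
      show "{g' \<in> Ocl. int_coeffs (g - g')} \<subseteq> cs Kz g"
      proof
        fix g' assume "g' \<in> {g' \<in> Ocl. int_coeffs (g - g')}"
        hence g': "g' \<in> Ocl" "int_coeffs (g - g')" by auto
        have "g' - g \<in> Ocl" using subgrpD(2)[OF subgrp_Ocl g' (1) g] .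
        moreover have "int_coeffs (g' - g)" using g'(2) unfolding int_coeffs_def
          by (metis coeff_diff minus_diff_eq Ints_minus)
        ultimately have "g' - g \<in> Kz" unfolding Kz_def Ocl_def by auto
        thus "g' \<in> cs Kz g" unfolding cs_def by (auto intro!: image_eqI[of _ _ "g' - g"])
      qed
    next
      show "cs Kz g \<subseteq> {g' \<in> Ocl. int_coeffs (g - g')}"
      proof
        fix g' assume "g' \<in> cs Kz g"
        then obtain z where z: "z \<in> Kz" "g' = g + z" unfolding cs_def by auto
        have "g + z \<in> Ocl" using subgrpD(4)[OF subgrp_Ocl g] z(1) Kz_Ocl by auto
        moreover have "int_coeffs (g - (g + z))" using z(1) unfolding Kz_def int_coeffs_def by auto
        ultimately show "g' \<in> {g' \<in> Ocl. int_coeffs (g - g')}" using z by auto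
      qed
    qed
  qed
  thus ?thesis unfolding ind_def int_closure_eq by simp
qed

end




lemma adj3:
  fixes a b c d e x0 x1 x2 :: "'a::comm_ring_1"
  defines "r0 \<equiv> a*x0+b*x1+c*x2" and "r1 \<equiv> b*x0+c*x1+d*x2" and "r2 \<equiv> c*x0+d*x1+e*x2"
    and "D \<equiv> a*(c*e-d^2) - b*(b*e-c*d) + c*(b*d-c^2)"
  shows "(c*e - d^2)*r0 + (c*d - b*e)*r1 + (b*d - c^2)*r2 = D * x0"
    "(c*d - b*e)*r0 + (a*e - c^2)*r1 + (b*c - a*d)*r2 = D * x1"
    "(b*d - c^2)*r0 + (b*c - a*d)*r1 + (a*c - b^2)*r2 = D * x2"
  unfolding assms by (simp_all add: algebra_simps power2_eq_square)

definition ps :: "int \<Rightarrow> int \<Rightarrow> int \<Rightarrow> nat \<Rightarrow> int" where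
  "ps k A B m = (if m = 0 then 3 else if m = 1 then -k else if m = 2 then k^2 - 2*A
     else if m = 3 then 3*k*A - 3*B - k^3 else k^4 - 4*k^2*A + 2*A^2 + 4*k*B)"

lemma ps_det: "ps k A B 0 * (ps k A B 2 * ps k A B 4 - (ps k A B 3)^2) - ps k A B 1 * (ps k A B 1 * ps k A B 4 - ps k A B 2 * ps k A B 3)
   + ps k A B 2 * (ps k A B 1 * ps k A B 3 - (ps k A B 2)^2) = cubic_disc k A B"
  unfolding ps_def cubic_disc_def by (simp add: algebra_simps power2_eq_square power3_eq_cube power4_eq_xxxx)

context cubic
begin

lemma power_sums: "m \<le> 4 \<Longrightarrow> a1^m + a2^m + a3^m = of_int (ps k A B m)"
proof -
  assume m: "m \<le> 4"
  have e: "of_int k = -(a1+a2+a3)" "of_int A = a1*a2+a1*a3+a2*a3" "of_int B = -(a1*a2*a3)"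
    using vk vA vB by auto
  have "m = 0 \<or> m = 1 \<or> m = 2 \<or> m = 3 \<or> m = 4" using m by auto
  thus ?thesis
  proof (elim disjE)
    assume "m = 0" thus ?thesis by (simp add: ps_def)
  next
    assume "m = 1" thus ?thesis by (simp add: ps_def e)
  next
    assume "m = 2" thus ?thesis by (simp add: ps_def e algebra_simps power2_eq_square power3_eq_cube power4_eq_xxxx)
  next
    assume "m = 3" thus ?thesis by (simp add: ps_def e algebra_simps power2_eq_square power3_eq_cube power4_eq_xxxx)
  next
    assume "m = 4" thus ?thesis by (simp add: ps_def e algebra_simps power2_eq_square power3_eq_cube power4_eq_xxxx)
  qed
qed

lemma disc_bound:
  assumes g: "g \<in> Ocl" and l: "l < 3"
  shows "of_int (cubic_disc k A B) * coeff g l \<in> \<int>"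
proof -
  define x0 where "x0 = coeff g 0"
  define x1 where "x1 = coeff g 1"
  define x2 where "x2 = coeff g 2"
  have dg: "degree g < 3" and io: "inO g" using g unfolding Ocl_def by auto
  define s where "s m = rat_of_int (ps k A B m)" for m
  define r where "r j = x0 * s j + x1 * s (j+1) + x2 * s (j+2)" for j
  have rint: "r j \<in> \<int>" if j: "j \<le> 2" for j
  proof -
    define T where "T = ev g a1 * a1^j + ev g a2 * a2^j + ev g a3 * a3^j"
    have "algebraic_int T" unfolding T_def using io roots_alg_int unfolding inO_def
      by (auto intro!: alg_int_add alg_int_mult alg_int_power)
    have "T = of_rat x0 * (a1^j + a2^j + a3^j) + of_rat x1 * (a1^(j+1) + a2^(j+1) + a3^(j+1))
        + of_rat x2 * (a1^(j+2) + a2^(j+2) + a3^(j+2))"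
      unfolding T_def ev3[OF dg] x0_def x1_def x2_def by (simp add: algebra_simps power2_eq_square)
    also have "\<dots> = of_rat (r j)"
      using power_sums[of j] power_sums[of "j+1"] power_sums[of "j+2"] j
      unfolding r_def s_def by (simp add: of_rat_add of_rat_mult)
    finally have "of_rat (r j) \<in> (\<int> :: complex set)"
      using \<open>algebraic_int T\<close> rational_algebraic_int_is_int by (metis Rats_of_rat)
    thus ?thesis by (rule rat_in_Ints_of_rat)
  qed
  have r0: "r 0 \<in> \<int>" and r1: "r 1 \<in> \<int>" and r2: "r 2 \<in> \<int>" using rint by auto
  have D: "rat_of_int (cubic_disc k A B) = s 0 * (s 2 * s 4 - (s 3)^2) - s 1 * (s 1 * s 4 - s 2 * s 3) + s 2 * (s 1 * s 3 - (s 2)^2)"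
    unfolding s_def ps_det[symmetric] by simp
  have r': "r 0 = s 0 * x0 + s 1 * x1 + s 2 * x2" "r 1 = s 1 * x0 + s 2 * x1 + s 3 * x2"
      "r 2 = s 2 * x0 + s 3 * x1 + s 4 * x2"
    unfolding r_def by (simp_all add: mult_ac numeral_2_eq_2 numeral_3_eq_3 eval_nat_numeral)
  have si: "s m \<in> \<int>" for m unfolding s_def by simp
  have "l = 0 \<or> l = 1 \<or> l = 2" using l by auto
  thus ?thesis
  proof (elim disjE)
    assume "l = 0"
    have "rat_of_int (cubic_disc k A B) * x0 = (s 2 * s 4 - (s 3)^2)*r 0 + (s 2 * s 3 - s 1 * s 4)*r 1 + (s 1 * s 3 - (s 2)^2)*r 2"
      unfolding D r' by (simp add: algebra_simps power2_eq_square)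
    also have "\<dots> \<in> \<int>" using r0 r1 r2 si by (intro Ints_add Ints_mult Ints_diff Ints_power) auto
    finally show ?thesis using \<open>l = 0\<close> x0_def by simp
  next
    assume "l = 1"
    have "rat_of_int (cubic_disc k A B) * x1 = (s 2 * s 3 - s 1 * s 4)*r 0 + (s 0 * s 4 - (s 2)^2)*r 1 + (s 1 * s 2 - s 0 * s 3)*r 2"
      unfolding D r' by (simp add: algebra_simps power2_eq_square)
    also have "\<dots> \<in> \<int>" using r0 r1 r2 si by (intro Ints_add Ints_mult Ints_diff Ints_power) auto
    finally show ?thesis using \<open>l = 1\<close> x1_def by simp
  next
    assume "l = 2"
    have "rat_of_int (cubic_disc k A B) * x2 = (s 1 * s 3 - (s 2)^2)*r 0 + (s 1 * s 2 - s 0 * s 3)*r 1 + (s 0 * s 2 - (s 1)^2)*r 2"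
      unfolding D r' by (simp add: algebra_simps power2_eq_square)
    also have "\<dots> \<in> \<int>" using r0 r1 r2 si by (intro Ints_add Ints_mult Ints_diff Ints_power) auto
    finally show ?thesis using \<open>l = 2\<close> x2_def by simp
  qed
qed

end


lemma u_identity:
  fixes y b0 b1 b2 :: "'a::comm_ring_1"
  assumes F: "y^3 + b2*y^2 + b1*y + b0 = 0"
  defines "u \<equiv> y^2 + b2*y"
  shows "u^3 + 2*b1*u^2 + (b1^2 + b0*b2)*u + (b0*b1*b2 - b0^2) = 0"
proof -
  have s1: "u*y = -(b1*y + b0)" using F unfolding u_def
    by (simp add: algebra_simps power2_eq_square power3_eq_cube eq_neg_iff_add_eq_0)
  have s2: "u^2 = -(b1*y + b0)*(y + b2)"
  proof -
    have "u^2 = (u*y)*(y+b2)" unfolding u_def by (simp add: algebra_simps power2_eq_square)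
    thus ?thesis using s1 by simp
  qed
  have s3: "u^2 + b1*u + b0*b2 = -(b0*y)" unfolding s2 unfolding u_def
    by (simp add: algebra_simps power2_eq_square)
  have "(u^2 + b1*u + b0*b2)*(u + b1) = -(b0*(u*y + b1*y))" unfolding s3 by (simp add: algebra_simps)
  also have "\<dots> = b0^2" unfolding s1 by (simp add: algebra_simps power2_eq_square)
  finally have "(u^2 + b1*u + b0*b2)*(u + b1) - b0^2 = 0" by simp
  thus ?thesis by (simp add: algebra_simps power2_eq_square power3_eq_cube)
qed

context cubic
begin

lemma dir1:
  fixes p :: nat and r :: int
  assumes p: "prime p" and c1: "(int p)^2 dvd r^3 + k*r^2 + A*r + B" and c2: "int p dvd 3*r^2 + 2*k*r + A"
  shows "p dvd card (cs Kz ` Ocl)"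
proof -
  define b2 where "b2 = 3*r + k"
  define b1 where "b1 = 3*r^2 + 2*k*r + A"
  define b0 where "b0 = r^3 + k*r^2 + A*r + B"
  obtain \<beta>1 where \<beta>1: "b1 = int p * \<beta>1" using c2 unfolding b1_def by (metis dvdE)
  obtain \<beta>0 where \<beta>0: "b0 = (int p)^2 * \<beta>0" using c1 unfolding b0_def by (metis dvdE)
  have p0: "int p \<noteq> 0" using p by (simp add: prime_gt_0_nat)
  define q :: rat where "q = of_int (int p)"
  have q0: "q \<noteq> 0" using p0 unfolding q_def by simp
  define t :: "rat poly" where "t = [:of_int (r^2 - b2*r) / q, of_int (b2 - 2*r) / q, 1 / q:]"
  have dt: "degree t < 3" unfolding t_def
    by (rule le_less_trans[OF degree_pCons_le]) (auto intro: le_less_trans[OF degree_pCons_le])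
  have ct2: "coeff t 2 = 1 / q" unfolding t_def by (simp add: numeral_2_eq_2)
  define h :: "int poly" where "h = [:\<beta>0*b2*\<beta>1 - int p*\<beta>0^2, \<beta>1^2 + \<beta>0*b2, 2*\<beta>1, 1:]"
  have mh: "monic h" unfolding h_def by simp
  have tO: "inO t" unfolding inO_def
  proof
    fix a assume a: "a \<in> {a1,a2,a3}"
    define y where "y = a - of_int r"
    have F: "y^3 + of_int b2*y^2 + of_int b1*y + of_int b0 = 0"
    proof -
      have "y^3 + of_int b2*y^2 + of_int b1*y + of_int b0 = a^3 + of_int k * a^2 + of_int A * a + of_int B"
        unfolding y_def b2_def b1_def b0_def by (simp add: algebra_simps power2_eq_square power3_eq_cube)
      thus ?thesis using root_eq[OF a] by simp
    qed
    define u where "u = y^2 + of_int b2*y"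
    have U: "u^3 + 2*of_int b1*u^2 + ((of_int b1)^2 + of_int b0*of_int b2)*u + (of_int b0*of_int b1*of_int b2 - (of_int b0)^2) = 0"
      using u_identity[OF F] unfolding u_def .
    obtain P :: complex where PP: "P = of_nat p" by simp
    have P0: "P \<noteq> 0" using p0 PP by simp
    have w0: "ev t a = of_int (r^2 - b2*r) / P + of_int (b2 - 2*r) / P * a + 1 / P * a^2"
      unfolding ev3[OF dt] unfolding t_def PP q_def by (simp add: of_rat_divide of_rat_diff of_rat_mult of_rat_add numeral_2_eq_2)
    have w: "ev t a = u / P"
      unfolding w0 u_def y_def using P0 by (simp add: field_simps) (simp add: algebra_simps power2_eq_square)
    have e1: "(of_int b1 :: complex) = P * of_int \<beta>1" unfolding \<beta>1 PP by simp
    have e0: "(of_int b0 :: complex) = P^2 * of_int \<beta>0" unfolding \<beta>0 PP by simp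
    have "poly (of_int_poly h) (ev t a) = (u/P)^3 + 2*of_int \<beta>1*(u/P)^2 + ((of_int \<beta>1)^2 + of_int \<beta>0*of_int b2)*(u/P) + (of_int \<beta>0*of_int b2*of_int \<beta>1 - P*(of_int \<beta>0)^2)"
      unfolding w h_def PP by (simp add: algebra_simps power2_eq_square power3_eq_cube)
    also have "\<dots> = (u^3 + 2*of_int b1*u^2 + ((of_int b1)^2 + of_int b0*of_int b2)*u + (of_int b0*of_int b1*of_int b2 - (of_int b0)^2)) / P^3"
      unfolding e1 e0 using P0 by (simp add: field_simps power2_eq_square power3_eq_cube)
    also have "\<dots> = 0" using U by simp
    finally show "algebraic_int (ev t a)" unfolding algebraic_int_altdef_ipoly using mh by blast
  qed
  define H where "H = {z + Polynomial.smult (of_int j) t | z j. z \<in> Kz}"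
  have degsm: "degree (Polynomial.smult c t) < 3" for c using dt by (meson degree_smult_le le_less_trans)
  have HO: "H \<subseteq> Ocl"
  proof
    fix g assume "g \<in> H"
    then obtain z j where g: "g = z + Polynomial.smult (of_int j) t" "z \<in> Kz" unfolding H_def by auto
    have "degree z < 3" using g unfolding Kz_def by auto
    hence "degree g < 3" unfolding g(1) using degsm[of "of_int j"] by (rule deg_lt_add)
    moreover have "inO g" using g int_coeffs_inO inO_smult_int[OF tO] inO_add unfolding Kz_def by auto
    ultimately show "g \<in> Ocl" unfolding Ocl_def by auto
  qed
  have KH: "Kz \<subseteq> H"
  proof
    fix z assume z: "z \<in> Kz"
    have "z = z + Polynomial.smult (of_int 0) t" by simp
    thus "z \<in> H" unfolding H_def using z by blast
  qed
  have sH: "subgrp H" unfolding subgrp_def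
  proof (intro conjI ballI)
    show "0 \<in> H" using KH subgrpD(1)[OF subgrp_Kz] by auto
    fix x y assume "x \<in> H" "y \<in> H"
    then obtain z1 j1 z2 j2 where "x = z1 + Polynomial.smult (of_int j1) t" "z1 \<in> Kz"
      "y = z2 + Polynomial.smult (of_int j2) t" "z2 \<in> Kz" unfolding H_def by auto
    hence "x - y = (z1 - z2) + Polynomial.smult (of_int (j1 - j2)) t" "z1 - z2 \<in> Kz"
      by (auto simp: algebra_simps smult_diff_left subgrpD(2)[OF subgrp_Kz])
    thus "x - y \<in> H" unfolding H_def by blast
  qed
  have pt: "Polynomial.smult q t \<in> Kz"
  proof -
    have "Polynomial.smult q t = [:of_int (r^2 - b2*r), of_int (b2 - 2*r), 1:]"
      unfolding t_def using q0 by simp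
    moreover have "degree [:of_int (r^2 - b2*r), of_int (b2 - 2*r), 1::rat:] < 3"
      by (rule le_less_trans[OF degree_pCons_le]) (auto intro: le_less_trans[OF degree_pCons_le])
    moreover have "int_coeffs [:of_int (r^2 - b2*r), of_int (b2 - 2*r), 1::rat:]"
      unfolding int_coeffs_def by (auto simp: coeff_pCons split: nat.splits)
    ultimately show ?thesis unfolding Kz_def by simp
  qed
  have csj: "cs Kz (Polynomial.smult (of_int i) t) = cs Kz (Polynomial.smult (of_int j) t) \<longleftrightarrow> int p dvd i - j" for i j
  proof -
    have "cs Kz (Polynomial.smult (of_int i) t) = cs Kz (Polynomial.smult (of_int j) t) \<longleftrightarrow>
       Polynomial.smult (of_int (i - j)) t \<in> Kz"
      by (simp add: cs_eq_iff[OF subgrp_Kz] smult_diff_left)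
    also have "\<dots> \<longleftrightarrow> int p dvd i - j"
    proof
      assume "Polynomial.smult (of_int (i - j)) t \<in> Kz"
      hence "coeff (Polynomial.smult (of_int (i - j)) t) 2 \<in> \<int>" unfolding Kz_def int_coeffs_def by auto
      hence "of_int (i - j) / q \<in> \<int>" using ct2 by simp
      then obtain n where "of_int (i - j) / q = of_int n" by (meson Ints_cases)
      hence "of_int (i - j) = (of_int (int p * n) :: rat)" using q0 unfolding q_def by (simp add: field_simps)
      hence "i - j = int p * n" by (simp only: of_int_eq_iff)
      thus "int p dvd i - j" by simp
    next
      assume "int p dvd i - j"
      then obtain n where n: "i - j = int p * n" by (metis dvdE)
      have "Polynomial.smult (of_int (i - j)) t = Polynomial.smult (of_int n) (Polynomial.smult q t)"
        unfolding n q_def by (simp add: mult_ac)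
      also have "\<dots> \<in> Kz" using pt unfolding Kz_def int_coeffs_def
        by (auto intro: le_less_trans[OF degree_smult_le] simp: mult.assoc)
      finally show "Polynomial.smult (of_int (i - j)) t \<in> Kz" .
    qed
    finally show ?thesis .
  qed
  have cardH: "card (cs Kz ` H) = p"
  proof -
    have "cs Kz ` H = (\<lambda>j. cs Kz (Polynomial.smult (of_int j) t)) ` {0..<int p}"
    proof
      show "cs Kz ` H \<subseteq> (\<lambda>j. cs Kz (Polynomial.smult (of_int j) t)) ` {0..<int p}"
      proof
        fix C assume "C \<in> cs Kz ` H"
        then obtain z j where C: "C = cs Kz (z + Polynomial.smult (of_int j) t)" "z \<in> Kz" unfolding H_def by auto
        have "C = cs Kz (Polynomial.smult (of_int j) t)"
          unfolding C(1) cs_eq_iff[OF subgrp_Kz] using C(2) by simp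
        also have "\<dots> = cs Kz (Polynomial.smult (of_int (j mod int p)) t)"
          unfolding csj by (simp add: mod_eq_dvd_iff[symmetric])
        finally show "C \<in> (\<lambda>j. cs Kz (Polynomial.smult (of_int j) t)) ` {0..<int p}"
          using p0 by (auto intro!: imageI)
      qed
      show "(\<lambda>j. cs Kz (Polynomial.smult (of_int j) t)) ` {0..<int p} \<subseteq> cs Kz ` H"
      proof
        fix C assume "C \<in> (\<lambda>j. cs Kz (Polynomial.smult (of_int j) t)) ` {0..<int p}"
        then obtain j where "C = cs Kz (0 + Polynomial.smult (of_int j) t)" by auto
        moreover have "0 + Polynomial.smult (of_int j) t \<in> H" unfolding H_def using subgrpD(1)[OF subgrp_Kz] by blast
        ultimately show "C \<in> cs Kz ` H" by blast
      qed
    qed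
    also have "card \<dots> = card {0..<int p}"
    proof (rule card_image, rule inj_onI)
      fix i j assume ij: "i \<in> {0..<int p}" "j \<in> {0..<int p}"
        and "cs Kz (Polynomial.smult (of_int i) t) = cs Kz (Polynomial.smult (of_int j) t)"
      hence "int p dvd i - j" using csj by simp
      thus "i = j" using ij
        by (metis atLeastLessThan_iff mod_pos_pos_trivial mod_eq_dvd_iff)
    qed
    finally show ?thesis by simp
  qed
  show ?thesis
  proof (cases "finite (cs Kz ` Ocl)")
    case True
    from lagrange_generic[OF subgrp_Kz sH subgrp_Ocl KH HO True] show ?thesis unfolding cardH .
  next
    case False thus ?thesis by simp
  qed
qed

end



lemma int_dvd_of_rat_dvd:
  fixes f G :: "int poly"
  assumes mf: "monic f" and d: "(of_int_poly f :: rat poly) dvd of_int_poly G"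
  shows "f dvd G"
proof -
  obtain q r where qr: "pseudo_divmod G f = (q, r)" by (cases "pseudo_divmod G f")
  have f0: "f \<noteq> 0" using mf by auto
  from pseudo_divmod[OF f0 qr] mf have e: "G = f * q + r" and r: "r = 0 \<or> degree r < degree f" by auto
  have "(of_int_poly r :: rat poly) = of_int_poly G - of_int_poly f * of_int_poly q"
    using e by (simp add: of_int_poly_hom.hom_add of_int_poly_hom.hom_mult)
  hence dr: "(of_int_poly f :: rat poly) dvd of_int_poly r" using d by (simp add: dvd_diff)
  have "r = 0"
  proof (rule ccontr)
    assume "r \<noteq> 0"
    hence "(of_int_poly r :: rat poly) \<noteq> 0" by simp
    from dvd_imp_degree_le[OF dr this] have "degree f \<le> degree r" by simp
    thus False using r \<open>r \<noteq> 0\<close> by simp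
  qed
  thus ?thesis using e by simp
qed

definition cgr :: "int poly \<Rightarrow> int \<Rightarrow> int poly \<Rightarrow> int poly \<Rightarrow> bool" where
  "cgr f P v w \<longleftrightarrow> (\<exists>q R. v - w = f * q + Polynomial.smult P R)"

lemma cgr_refl: "cgr f P v v"
  unfolding cgr_def by (auto intro!: exI[of _ 0])
lemma cgr_trans: "cgr f P u v \<Longrightarrow> cgr f P v w \<Longrightarrow> cgr f P u w"
  unfolding cgr_def
proof (elim exE)
  fix q1 R1 q2 R2 assume "u - v = f * q1 + Polynomial.smult P R1" "v - w = f * q2 + Polynomial.smult P R2"
  hence "u - w = f * (q1 + q2) + Polynomial.smult P (R1 + R2)" by (simp add: algebra_simps smult_add_right)
  thus "\<exists>q R. u - w = f * q + Polynomial.smult P R" by blast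
qed
lemma cgr_mult: "cgr f P u v \<Longrightarrow> cgr f P (u * w) (v * w)"
  unfolding cgr_def
proof (elim exE)
  fix q R assume "u - v = f * q + Polynomial.smult P R"
  hence "u * w - v * w = f * (q * w) + Polynomial.smult P (R * w)" by (simp add: algebra_simps)
  thus "\<exists>q R. u * w - v * w = f * q + Polynomial.smult P R" by blast
qed

lemma cgr_pow_idem:
  assumes "cgr f P (e * e) e"
  shows "n \<ge> 1 \<Longrightarrow> cgr f P (e ^ n) e"
proof (induction n rule: dec_induct)
  case base thus ?case by (simp add: cgr_refl)
next
  case (step n)
  have "cgr f P (e ^ n * e) (e * e)" using cgr_mult[OF step.IH] .
  hence "cgr f P (e ^ Suc n) (e * e)" by (simp add: mult.commute)
  thus ?case using cgr_trans assms by blast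
qed

lemma cgr_deg_low:
  fixes f e :: "int poly"
  assumes mf: "monic f" and df: "degree f = 3" and c: "cgr f P e 0" and de: "degree e < 3"
  shows "P dvd coeff e i"
proof -
  from c obtain q R where eq: "e = f * q + Polynomial.smult P R" unfolding cgr_def by auto
  have allq: "P dvd coeff q j" for j
  proof (rule ccontr)
    assume "\<not> P dvd coeff q j"
    define S where "S = {j. \<not> P dvd coeff q j}"
    have "S \<subseteq> {..degree q}" unfolding S_def by (auto intro: ccontr simp: coeff_eq_0 le_degree)
    hence fS: "finite S" by (rule finite_subset) simp
    have "j \<in> S" unfolding S_def using \<open>\<not> P dvd coeff q j\<close> by simp
    define m where "m = Max S"
    have mS: "m \<in> S" unfolding m_def using fS \<open>j \<in> S\<close> by (intro Max_in) auto
    have above: "P dvd coeff q l" if "l > m" for l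
    proof (rule ccontr)
      assume "\<not> P dvd coeff q l"
      hence "l \<in> S" unfolding S_def by simp
      hence "l \<le> m" unfolding m_def using fS by simp
      thus False using that by simp
    qed
    have "coeff e (m + 3) = 0" using de by (intro coeff_eq_0) simp
    hence "coeff (f * q) (m + 3) = - coeff (Polynomial.smult P R) (m + 3)" using eq by simp
    hence d1: "P dvd coeff (f * q) (m + 3)" by simp
    have "coeff (f * q) (m + 3) = (\<Sum>i\<le>m+3. coeff f i * coeff q (m + 3 - i))" by (rule coeff_mult)
    also have "\<dots> = (\<Sum>i\<le>3. coeff f i * coeff q (m + 3 - i))"
    proof (rule sum.mono_neutral_right)
      show "\<forall>i\<in>{..m + 3} - {..3}. coeff f i * coeff q (m + 3 - i) = 0"
        using df by (auto simp: coeff_eq_0)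
    qed auto
    also have "\<dots> = coeff q m + (\<Sum>i<3. coeff f i * coeff q (m + 3 - i))"
      using mf df by (simp add: eval_nat_numeral sum.atMost_Suc sum.lessThan_Suc)
    finally have e2: "coeff (f * q) (m + 3) = coeff q m + (\<Sum>i<3. coeff f i * coeff q (m + 3 - i))" .
    have "P dvd (\<Sum>i<3. coeff f i * coeff q (m + 3 - i))"
      by (rule dvd_sum) (auto intro!: dvd_mult above)
    hence "P dvd coeff q m" using d1 e2 by (metis dvd_add_left_iff)
    thus False using mS unfolding S_def by simp
  qed
  have "P dvd coeff (f * q) i" unfolding coeff_mult by (rule dvd_sum) (auto intro: dvd_mult allq)
  thus ?thesis using eq by simp
qed



locale cubic_p = cubic +
  fixes p :: nat
  assumes prime: "prime p"
begin

definition Jm :: "int poly \<Rightarrow> bool" where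
  "Jm v \<longleftrightarrow> (\<forall>a\<in>{a1,a2,a3}. algebraic_int (poly (of_int_poly v) a / of_nat p))"

lemma p0: "(of_nat p :: complex) \<noteq> 0" using prime by (simp add: prime_gt_0_nat)
lemma pi0: "int p \<noteq> 0" using prime by (simp add: prime_gt_0_nat)

lemma pint: "a \<in> {a1,a2,a3} \<Longrightarrow> algebraic_int (poly (of_int_poly w) a :: complex)"
proof -
  assume a: "a \<in> {a1,a2,a3}"
  have "int_coeffs (of_int_poly w)" unfolding int_coeffs_def by simp
  hence "inO (of_int_poly w)" by (rule int_coeffs_inO)
  hence "algebraic_int (ev (of_int_poly w) a)" using a unfolding inO_def by auto
  thus ?thesis unfolding ev_def of_rat_of_int_poly .
qed

lemma J_add: "Jm v \<Longrightarrow> Jm w \<Longrightarrow> Jm (v + w)"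
  unfolding Jm_def by (auto simp: of_int_poly_hom.hom_add add_divide_distrib intro: alg_int_add)

lemma J_mult: "Jm v \<Longrightarrow> Jm (v * w)"
  unfolding Jm_def
proof
  fix a assume H: "\<forall>a\<in>{a1, a2, a3}. algebraic_int (poly (of_int_poly v) a / of_nat p)" and a: "a \<in> {a1,a2,a3}"
  have "algebraic_int (poly (of_int_poly v) a / of_nat p)" using H a by auto
  from alg_int_mult[OF this pint[OF a]]
  have "algebraic_int (poly (of_int_poly v) a / of_nat p * poly (of_int_poly w) a)" .
  moreover have e: "poly (of_int_poly (v * w)) a = poly (of_int_poly v) a * (poly (of_int_poly w) a :: complex)"
    by (simp add: of_int_poly_hom.hom_mult)
  ultimately show "algebraic_int (poly (of_int_poly (v * w)) a / of_nat p)" unfolding e by (simp add: mult_ac)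
qed

lemma J_multl: "Jm v \<Longrightarrow> Jm (w * v)" using J_mult by (simp add: mult.commute)

lemma J_p: "Jm (Polynomial.smult (int p) w)"
  unfolding Jm_def using pint p0 by (simp add: hom_distribs)

lemma J_f: "Jm (cub k A B * w)"
proof -
  have "poly (of_int_poly (cub k A B) :: complex poly) a = 0" if "a \<in> {a1,a2,a3}" for a
    using that unfolding split poly_three by auto
  thus ?thesis unfolding Jm_def by (simp add: of_int_poly_hom.hom_mult)
qed

lemma J_smult: "Jm v \<Longrightarrow> Jm (Polynomial.smult c v)"
  using J_multl[of v "[:c:]"] by simp

lemma J_minus: "Jm v \<Longrightarrow> Jm w \<Longrightarrow> Jm (v - w)"
  using J_add[of v "Polynomial.smult (-1) w"] J_smult[of w "-1"] by simp

lemma J_const: "Jm [:c:] \<Longrightarrow> int p dvd c"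
proof -
  assume "Jm [:c:]"
  hence "algebraic_int (poly (of_int_poly [:c:]) a1 / of_nat p :: complex)" unfolding Jm_def by auto
  moreover have "(of_int_poly [:c:] :: complex poly) = [:of_int c:]" by (simp add: hom_distribs)
  ultimately have "algebraic_int (of_int c / of_nat p :: complex)" by simp
  moreover have "(of_int c / of_nat p :: complex) \<in> \<rat>"
    by (metis Rats_divide Rats_of_int Rats_of_nat)
  ultimately have "(of_int c / of_nat p :: complex) \<in> \<int>" by (rule rational_algebraic_int_is_int)
  then obtain n where "(of_int c / of_nat p :: complex) = of_int n" by (meson Ints_cases)
  hence "(of_int c :: complex) = of_int (int p * n)" using p0 by (simp add: field_simps)
  hence "c = int p * n" by (simp only: of_int_eq_iff)
  thus ?thesis by simp
qed

lemma J_cgr: "cgr (cub k A B) (int p) v w \<Longrightarrow> Jm v \<Longrightarrow> Jm w"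
proof -
  assume "cgr (cub k A B) (int p) v w" "Jm v"
  then obtain q R where e: "v - w = cub k A B * q + Polynomial.smult (int p) R" unfolding cgr_def by auto
  have "w = v - (cub k A B * q + Polynomial.smult (int p) R)" using e by (simp add: algebra_simps)
  moreover have "Jm (cub k A B * q + Polynomial.smult (int p) R)" using J_add J_f J_p by blast
  ultimately show "Jm w" using J_minus \<open>Jm v\<close> by simp
qed

lemma J_nil:
  assumes "Jm v"
  shows "\<exists>n\<ge>1. cgr (cub k A B) (int p) (v ^ n) 0"
proof -
  define P :: complex where "P = of_nat p"
  have P0: "P \<noteq> 0" using p0 unfolding P_def .
  have "\<exists>h. monic h \<and> poly (of_int_poly h) (poly (of_int_poly v) a / P) = 0 \<and> degree h > 0"
    if "a \<in> {a1,a2,a3}" for a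
  proof -
    have "algebraic_int (poly (of_int_poly v) a / P)" using assms that unfolding Jm_def P_def by auto
    from alg_int_poly_data[OF this] show ?thesis by blast
  qed
  then obtain h1 h2 h3 where h1: "monic h1" "poly (of_int_poly h1) (poly (of_int_poly v) a1 / P) = 0" "degree h1 > 0"
    and h2: "monic h2" "poly (of_int_poly h2) (poly (of_int_poly v) a2 / P) = 0"
    and h3: "monic h3" "poly (of_int_poly h3) (poly (of_int_poly v) a3 / P) = 0" by (metis insertCI)
  define H where "H = h1 * h2 * h3"
  have mH: "monic H" unfolding H_def using h1 h2 h3 by (simp add: monic_mult)
  define n where "n = degree H"
  have n1: "n \<ge> 1"
  proof -
    have nz: "h1 \<noteq> 0" "h2 \<noteq> 0" "h3 \<noteq> 0" using h1 h2 h3 by auto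
    have "degree H = degree h1 + degree h2 + degree h3" unfolding H_def
      using nz by (simp add: degree_mult_eq)
    thus ?thesis using h1(3) unfolding n_def by simp
  qed
  have Hz: "poly (of_int_poly H) (poly (of_int_poly v) a / P) = 0" if "a \<in> {a1,a2,a3}" for a
    using that h1 h2 h3 unfolding H_def by (auto simp: of_int_poly_hom.hom_mult)
  define Pv where "Pv = (\<Sum>j\<le>n. Polynomial.smult (coeff H j * int p ^ (n - j)) (v ^ j))"
  define R where "R = (\<Sum>j<n. Polynomial.smult (coeff H j * int p ^ (n - j - 1)) (v ^ j))"
  have PvR: "Pv = v ^ n + Polynomial.smult (int p) R"
  proof -
    have "Pv = Polynomial.smult (coeff H n * int p ^ (n - n)) (v ^ n) + (\<Sum>j<n. Polynomial.smult (coeff H j * int p ^ (n - j)) (v ^ j))"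
      unfolding Pv_def by (simp add: lessThan_Suc_atMost[symmetric] add.commute)
    also have "coeff H n = 1" using mH unfolding n_def by simp
    also have "(\<Sum>j<n. Polynomial.smult (coeff H j * int p ^ (n - j)) (v ^ j)) = Polynomial.smult (int p) R"
      unfolding R_def smult_sum2
    proof (rule sum.cong[OF refl])
      fix j assume "j \<in> {..<n}"
      hence "int p ^ (n - j) = int p * int p ^ (n - j - 1)" by (metis Suc_diff_Suc lessThan_iff diff_Suc_1 power_Suc diff_diff_left)
      thus "Polynomial.smult (coeff H j * int p ^ (n - j)) (v ^ j) = Polynomial.smult (int p) (Polynomial.smult (coeff H j * int p ^ (n - j - 1)) (v ^ j))"
        by (simp add: mult_ac)
    qed
    finally show ?thesis by simp
  qed
  have Pv0: "poly (of_int_poly Pv) a = 0" if a: "a \<in> {a1,a2,a3}" for a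
  proof -
    define x where "x = poly (of_int_poly v) a"
    have "poly (of_int_poly Pv) a = (\<Sum>j\<le>n. of_int (coeff H j) * P ^ (n - j) * x ^ j)"
      unfolding Pv_def x_def P_def by (simp add: of_int_poly_hom.hom_sum poly_sum hom_distribs of_int_poly_hom.hom_power)
    also have "\<dots> = P ^ n * (\<Sum>j\<le>n. of_int (coeff H j) * (x / P) ^ j)"
      unfolding sum_distrib_left
    proof (rule sum.cong[OF refl])
      fix j assume "j \<in> {..n}"
      hence "P ^ n = P ^ (n - j) * P ^ j" by (simp add: power_add[symmetric])
      thus "of_int (coeff H j) * P ^ (n - j) * x ^ j = P ^ n * (of_int (coeff H j) * (x / P) ^ j)"
        using P0 by (simp add: power_divide field_simps)
    qed
    also have "(\<Sum>j\<le>n. of_int (coeff H j) * (x / P) ^ j) = poly (of_int_poly H) (x / P)"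
      unfolding n_def by (simp add: poly_altdef degree_map_poly)
    also have "\<dots> = 0" using Hz[OF a] unfolding x_def .
    finally show ?thesis by simp
  qed
  have "[:-a1,1:]*[:-a2,1:]*[:-a3,1:] dvd (of_int_poly Pv :: complex poly)"
    using three_roots_dvd[OF Pv0 Pv0 Pv0 dist] by auto
  hence "(of_int_poly (cub k A B) :: complex poly) dvd map_poly of_rat (of_int_poly Pv :: rat poly)"
    unfolding split of_rat_of_int_poly .
  hence "(of_int_poly (cub k A B) :: rat poly) dvd of_int_poly Pv" by (rule complex_dvd_rat)
  hence "cub k A B dvd Pv" by (rule int_dvd_of_rat_dvd[rotated]) (simp add: cub_def)
  then obtain q where "Pv = cub k A B * q" by (metis dvdE)
  hence "v ^ n - 0 = cub k A B * q + Polynomial.smult (int p) (- R)" using PvR by (simp add: algebra_simps)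
  thus ?thesis using n1 unfolding cgr_def by blast
qed

lemma J_van:
  assumes "Jm v" "int p dvd poly (cub k A B) l"
  shows "int p dvd poly v l"
proof -
  obtain n where n: "n \<ge> 1" "cgr (cub k A B) (int p) (v ^ n) 0" using J_nil[OF assms(1)] by blast
  then obtain q R where "v ^ n = cub k A B * q + Polynomial.smult (int p) R" unfolding cgr_def by auto
  hence "poly v l ^ n = poly (cub k A B) l * poly q l + int p * poly R l"
    by (metis poly_power poly_mult poly_add poly_smult)
  hence "int p dvd poly v l ^ n" using assms(2) by simp
  moreover have "prime (int p)" using prime by simp
  ultimately show ?thesis using prime_dvd_power by blast
qed

end


lemma poly_ext_int: "(\<And>x::int. poly p x = poly q x) \<Longrightarrow> p = q"
  using poly_eq_poly_eq_iff by blast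

lemma cgr_sym: "cgr f P v w \<Longrightarrow> cgr f P w v"
  unfolding cgr_def
proof (elim exE)
  fix q R assume "v - w = f * q + Polynomial.smult P R"
  hence "w - v = f * (-q) + Polynomial.smult P (-R)" by (simp add: algebra_simps)
  thus "\<exists>q R. w - v = f * q + Polynomial.smult P R" by blast
qed

lemma inv_mod:
  fixes p :: nat and c :: int
  assumes "prime p" "\<not> int p dvd c"
  obtains \<beta> \<gamma> where "\<beta> * c = 1 + int p * \<gamma>"
proof -
  have "coprime (int p) c" using assms by (simp add: prime_imp_coprime)
  hence "gcd (int p) c = 1" by simp
  from bezout_int[of "int p" c] obtain u v where "u * int p + v * c = gcd (int p) c" by blast
  hence "v * c = 1 + int p * (-u)" using \<open>gcd (int p) c = 1\<close> by (simp add: algebra_simps)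
  thus ?thesis using that by blast
qed

context cubic_p
begin

definition tb2 :: "int \<Rightarrow> int" where "tb2 l = 3*l + k"
definition tb1 :: "int \<Rightarrow> int" where "tb1 l = 3*l^2 + 2*k*l + A"
definition tb0 :: "int \<Rightarrow> int" where "tb0 l = l^3 + k*l^2 + A*l + B"

lemma tb0_poly: "poly (cub k A B) l = tb0 l"
  unfolding tb0_def cub_def by (simp add: algebra_simps power2_eq_square power3_eq_cube)

lemma taylor_root:
  assumes "a \<in> {a1,a2,a3}"
  shows "(a - of_int l)^3 + of_int (tb2 l) * (a - of_int l)^2 + of_int (tb1 l) * (a - of_int l) + of_int (tb0 l) = 0"
proof -
  have "(a - of_int l)^3 + of_int (tb2 l) * (a - of_int l)^2 + of_int (tb1 l) * (a - of_int l) + of_int (tb0 l)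
      = a^3 + of_int k * a^2 + of_int A * a + of_int B"
    unfolding tb2_def tb1_def tb0_def by (simp add: algebra_simps power2_eq_square power3_eq_cube)
  thus ?thesis using root_eq[OF assms] by simp
qed

lemma taylor_poly:
  "cub k A B = [:-l,1:] * ([:-l,1:] * ([:-l,1:] + [:tb2 l:]) + [:tb1 l:]) + [:tb0 l:]"
  by (rule poly_ext_int) (simp add: cub_def tb2_def tb1_def tb0_def algebra_simps power2_eq_square power3_eq_cube)

lemma poly_y: "poly (of_int_poly [:-l,1:]) (a::complex) = a - of_int l"
  by (simp add: hom_distribs)

lemma L_final:
  assumes nC: "\<not> ((int p)^2 dvd tb0 l \<and> int p dvd tb1 l)"
    and d0: "int p dvd tb0 l" and d1: "int p dvd tb1 l"
    and J: "Jm ([:-l,1:] * ([:-l,1:] + [:tb2 l:]))"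
  shows False
proof -
  obtain c0 where c0: "tb0 l = int p * c0" using d0 by (metis dvdE)
  obtain \<beta>1 where \<beta>1: "tb1 l = int p * \<beta>1" using d1 by (metis dvdE)
  have nd: "\<not> (int p)^2 dvd tb0 l" using nC d1 by simp
  define v where "v = [:-l,1:] + [:tb2 l:]"
  define P :: complex where "P = of_nat p"
  have P0: "P \<noteq> 0" unfolding P_def using p0 .
  have J1: "Jm (Polynomial.smult c0 v)" unfolding Jm_def
  proof
    fix a assume a: "a \<in> {a1,a2,a3}"
    define Y where "Y = a - of_int l"
    define U where "U = Y^2 + of_int (tb2 l) * Y"
    have t: "algebraic_int (U / P)" using J a unfolding Jm_def U_def Y_def P_def
      by (auto simp: of_int_poly_hom.hom_mult hom_distribs power2_eq_square algebra_simps)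
    have F: "Y^3 + of_int (tb2 l) * Y^2 + of_int (tb1 l) * Y + of_int (tb0 l) = 0"
      using taylor_root[OF a] unfolding Y_def .
    have s1: "U * Y = -(of_int (tb1 l) * Y + of_int (tb0 l))" using F unfolding U_def
      by (simp add: algebra_simps power2_eq_square power3_eq_cube eq_neg_iff_add_eq_0)
    have s3: "U^2 + of_int (tb1 l) * U + of_int (tb0 l) * of_int (tb2 l) = - (of_int (tb0 l) * Y)"
    proof -
      have "U^2 = (U*Y)*(Y + of_int (tb2 l))" unfolding U_def by (simp add: algebra_simps power2_eq_square)
      thus ?thesis unfolding s1 unfolding U_def by (simp add: algebra_simps power2_eq_square)
    qed
    have "poly (of_int_poly (Polynomial.smult c0 v)) a / P = - ((U/P)^2 + of_int \<beta>1 * (U/P))"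
    proof -
      have pv: "poly (of_int_poly (Polynomial.smult c0 v)) a = of_int c0 * (Y + of_int (tb2 l))"
        unfolding v_def Y_def by (simp add: hom_distribs algebra_simps)
      have e0: "of_int (tb0 l) = P * of_int c0" and e1: "of_int (tb1 l) = P * of_int \<beta>1"
        unfolding c0 \<beta>1 P_def by simp_all
      have E0: "P * (of_int c0 * (Y + of_int (tb2 l))) + (U^2 + P * of_int \<beta>1 * U) = 0"
        using s3 unfolding e0 e1 by (simp add: algebra_simps)
      hence E1: "P * (of_int c0 * (Y + of_int (tb2 l))) = - (U^2 + P * of_int \<beta>1 * U)"
        by (simp only: eq_neg_iff_add_eq_0)
      note E = E1[symmetric]
      have "- ((U/P)^2 + of_int \<beta>1 * (U/P)) = - (U^2 + P * of_int \<beta>1 * U) / P^2"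
        using P0 by (simp add: field_simps power2_eq_square)
      also have "\<dots> = P * (of_int c0 * (Y + of_int (tb2 l))) / P^2" unfolding E ..
      also have "\<dots> = of_int c0 * (Y + of_int (tb2 l)) / P" using P0 by (simp add: power2_eq_square)
      finally show ?thesis unfolding pv by simp
    qed
    also have "algebraic_int \<dots>" using t by (intro algebraic_int_minus alg_int_add alg_int_mult alg_int_power) auto
    finally show "algebraic_int (poly (of_int_poly (Polynomial.smult c0 v)) a / of_nat p)" unfolding P_def .
  qed
  have nc0: "\<not> int p dvd c0"
  proof
    assume "int p dvd c0"
    then obtain m where "c0 = int p * m" by (metis dvdE)
    hence "tb0 l = (int p)^2 * m" using c0 by (simp add: power2_eq_square)
    thus False using nd by simp
  qed
  obtain \<beta> \<gamma> where bg: "\<beta> * c0 = 1 + int p * \<gamma>" using inv_mod[OF prime nc0] by blast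
  have Jv: "Jm v"
  proof -
    have "v = Polynomial.smult \<beta> (Polynomial.smult c0 v) - Polynomial.smult (int p) (Polynomial.smult \<gamma> v)"
      using bg by (simp add: smult_diff_left[symmetric] algebra_simps)
    thus ?thesis using J_minus[OF J_smult[OF J1] J_p] by metis
  qed
  have "int p dvd poly v l" using J_van[OF Jv] d0 tb0_poly by simp
  hence "int p dvd tb2 l" unfolding v_def by simp
  then obtain m2 where m2: "tb2 l = int p * m2" by (metis dvdE)
  have Jy: "Jm [:-l,1:]"
  proof -
    have "[:-l,1:] = v - Polynomial.smult (int p) [:m2:]" unfolding v_def m2 by simp
    thus ?thesis using J_minus[OF Jv J_p] by metis
  qed
  have "(of_int (tb0 l) / P^2 :: complex) \<in> \<int>"
  proof (rule rational_algebraic_int_is_int)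
    show "of_int (tb0 l) / P^2 \<in> \<rat>" unfolding P_def by (metis Rats_divide Rats_of_int Rats_of_nat Rats_power)
    define Y where "Y = a1 - of_int l"
    have s: "algebraic_int (Y / P)" using Jy unfolding Jm_def Y_def P_def by (auto simp: poly_y)
    have F: "Y^3 + of_int (tb2 l) * Y^2 + of_int (tb1 l) * Y + of_int (tb0 l) = 0"
      using taylor_root[of a1] unfolding Y_def by simp
    have "of_int (tb0 l) / P^2 = - (P * (Y/P)^3 + of_int m2 * P * (Y/P)^2 + of_int \<beta>1 * (Y/P))"
    proof -
      have "of_int (tb2 l) = P * of_int m2" "of_int (tb1 l) = P * of_int \<beta>1"
        unfolding m2 \<beta>1 P_def by simp_all
      thus ?thesis using F P0 by (simp add: field_simps power2_eq_square power3_eq_cube) (simp only: eq_neg_iff_add_eq_0, simp add: algebra_simps)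
    qed
    also have "algebraic_int \<dots>" using s unfolding P_def
      by (intro algebraic_int_minus alg_int_add alg_int_mult alg_int_power) auto
    finally show "algebraic_int (of_int (tb0 l) / P^2)" .
  qed
  then obtain m where "(of_int (tb0 l) / P^2 :: complex) = of_int m" by (meson Ints_cases)
  hence "(of_int (tb0 l) :: complex) = of_int ((int p)^2 * m)" using P0 unfolding P_def by (simp add: field_simps)
  hence "tb0 l = (int p)^2 * m" by (simp only: of_int_eq_iff)
  thus False using nd by simp
qed

end



context cubic_p
begin

lemma L_lin:
  assumes nC: "\<forall>r. \<not> ((int p)^2 dvd tb0 r \<and> int p dvd tb1 r)" and J: "Jm [:-l,1:]"
  shows False
proof -
  define y where "y = [:-l,1:]"
  define W where "W = y * (y + [:tb2 l:])"
  define q where "q = W + [:tb1 l:]"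
  have tp: "cub k A B = y * q + [:tb0 l:]" using taylor_poly[of l] unfolding q_def W_def y_def .
  have "Jm [:tb0 l:]"
  proof -
    have "[:tb0 l:] = cub k A B * 1 - q * y" using tp by (simp add: mult.commute)
    thus ?thesis using J_minus[OF J_f J_multl[OF J[folded y_def]]] by metis
  qed
  hence d0: "int p dvd tb0 l" by (rule J_const)
  have JW: "Jm W" unfolding W_def y_def using J_mult[OF J] .
  have d1: "int p dvd tb1 l"
  proof (rule ccontr)
    assume nd: "\<not> int p dvd tb1 l"
    obtain \<beta> \<gamma> where bg: "\<beta> * tb1 l = 1 + int p * \<gamma>" using inv_mod[OF prime nd] by blast
    obtain c0 where c0: "tb0 l = int p * c0" using d0 by (metis dvdE)
    define e where "e = 1 - Polynomial.smult \<beta> q"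
    have e_alt: "e = Polynomial.smult (-\<beta>) W + Polynomial.smult (int p) [:-\<gamma>:]"
    proof -
      have "e = 1 - Polynomial.smult \<beta> W - [:\<beta> * tb1 l:]" unfolding e_def q_def
        by (simp add: smult_add_right)
      also have "\<dots> = Polynomial.smult (-\<beta>) W + Polynomial.smult (int p) [:-\<gamma>:]" unfolding bg
        by (simp add: one_pCons)
      finally show ?thesis .
    qed
    have Je: "Jm e" unfolding e_alt using J_add[OF J_smult[OF JW] J_p] .
    have cg: "cgr (cub k A B) (int p) (e * e) e"
    proof -
      have "e * e - e = Polynomial.smult (\<beta>^2) (W * q) + Polynomial.smult (\<beta> * (int p * \<gamma>)) q"
      proof -
        have em1: "e - 1 = - Polynomial.smult \<beta> q" unfolding e_def by simp
        have ea: "e = - (Polynomial.smult \<beta> W + Polynomial.smult (int p) [:\<gamma>:])" unfolding e_alt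
          by (simp add: smult_minus_left)
        have "e * e - e = e * (e - 1)" by (simp add: algebra_simps)
        also have "\<dots> = (- (Polynomial.smult \<beta> W + Polynomial.smult (int p) [:\<gamma>:])) * (- Polynomial.smult \<beta> q)"
          by (subst em1, subst ea, rule refl)
        also have "\<dots> = Polynomial.smult (\<beta>^2) (W * q) + Polynomial.smult (\<beta> * (int p * \<gamma>)) q"
          by (simp add: algebra_simps power2_eq_square)
        finally show ?thesis .
      qed
      also have "W * q = (y + [:tb2 l:]) * (y * q)" unfolding W_def by (simp add: mult_ac)
      also have "y * q = cub k A B - [:int p * c0:]" using tp c0 by simp
      finally have "e * e - e = cub k A B * Polynomial.smult (\<beta>^2) (y + [:tb2 l:])
          + Polynomial.smult (int p) (Polynomial.smult (\<beta> * \<gamma>) q - Polynomial.smult (\<beta>^2 * c0) (y + [:tb2 l:]))"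
        by (simp add: algebra_simps smult_add_right smult_diff_right)
      thus ?thesis unfolding cgr_def by blast
    qed
    obtain n where n: "n \<ge> 1" "cgr (cub k A B) (int p) (e ^ n) 0" using J_nil[OF Je] by blast
    have "cgr (cub k A B) (int p) e 0"
      using cgr_trans[OF cgr_sym[OF cgr_pow_idem[OF cg n(1)]] n(2)] .
    moreover have e_expl: "e = [:1 - \<beta> * (l^2 - tb2 l * l + tb1 l), - \<beta> * (tb2 l - 2*l), -\<beta>:]"
      unfolding e_def q_def W_def y_def
      by (rule poly_ext_int) (simp add: algebra_simps power2_eq_square)
    moreover have "degree e < 3" unfolding e_expl
      by (rule le_less_trans[OF degree_pCons_le]) (auto intro: le_less_trans[OF degree_pCons_le])
    moreover have "monic (cub k A B)" "degree (cub k A B) = 3" by (simp_all add: cub_def eval_nat_numeral)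
    ultimately have "int p dvd coeff e 2" using cgr_deg_low by blast
    hence "int p dvd \<beta>" unfolding e_expl by (simp add: numeral_2_eq_2)
    hence "int p dvd 1 + int p * \<gamma>" unfolding bg[symmetric] by simp
    hence "int p dvd 1" by (simp add: dvd_add_left_iff)
    thus False using prime by (simp add: prime_gt_0_nat)
  qed
  show False using L_final[OF _ d0 d1] JW nC unfolding W_def y_def by blast
qed

end


context cubic_p
begin

lemma lin_contra:
  assumes nC: "\<forall>r. \<not> ((int p)^2 dvd tb0 r \<and> int p dvd tb1 r)" and J: "Jm [:c, d:]" and nd: "\<not> int p dvd d"
  shows False
proof -
  obtain \<beta> \<gamma> where bg: "\<beta> * d = 1 + int p * \<gamma>" using inv_mod[OF prime nd] by blast
  have "[:-(-\<beta>*c), 1:] = Polynomial.smult \<beta> [:c, d:] - Polynomial.smult (int p) [:0, \<gamma>:]"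
    using bg by simp
  hence "Jm [:-(-\<beta>*c), 1:]" using J_minus[OF J_smult[OF J] J_p] by metis
  thus False using L_lin[OF nC] by blast
qed

lemma linpoly:
  assumes nC: "\<forall>r. \<not> ((int p)^2 dvd tb0 r \<and> int p dvd tb1 r)" and J: "Jm [:c, d:]"
  shows "int p dvd c \<and> int p dvd d"
proof -
  have d: "int p dvd d" using lin_contra[OF nC J] by blast
  then obtain m where m: "d = int p * m" by (metis dvdE)
  have "[:c:] = [:c, d:] - Polynomial.smult (int p) [:0, m:]" using m by simp
  hence "Jm [:c:]" using J_minus[OF J J_p] by metis
  thus ?thesis using J_const d by blast
qed

lemma local_main:
  assumes nC: "\<forall>r. \<not> ((int p)^2 dvd tb0 r \<and> int p dvd tb1 r)" and J: "Jm u" and du: "degree u < 3"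
  shows "int p dvd coeff u i"
proof -
  define u0 where "u0 = coeff u 0"
  define u1 where "u1 = coeff u 1"
  define u2 where "u2 = coeff u 2"
  have ue: "u = [:u0, u1, u2:]" unfolding u0_def u1_def u2_def by (rule poly3_eq[OF du])
  have d2: "int p dvd u2"
  proof (rule ccontr)
    assume nd: "\<not> int p dvd u2"
    obtain \<beta> \<gamma> where bg: "\<beta> * u2 = 1 + int p * \<gamma>" using inv_mod[OF prime nd] by blast
    define c0 where "c0 = \<beta> * u0"
    define c1 where "c1 = \<beta> * u1"
    define c' where "c' = [:c0, c1, 1:]"
    have Jc: "Jm c'"
    proof -
      have "c' = Polynomial.smult \<beta> u - Polynomial.smult (int p) [:0, 0, \<gamma>:]"
        unfolding c'_def ue c0_def c1_def using bg by simp
      thus ?thesis using J_minus[OF J_smult[OF J] J_p] by metis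
    qed
    define l where "l = c1 - k"
    define z where "z = [:0,1:] * c' - Polynomial.smult l c' - cub k A B"
    have z_expl: "z = [:- l * c0 - B, c0 - l * c1 - A:]"
      unfolding z_def c'_def l_def cub_def by (simp add: algebra_simps)
    have Jf1: "Jm (cub k A B)" using J_f[of 1] by simp
    have Jz: "Jm z" unfolding z_def by (rule J_minus[OF J_minus[OF J_multl[OF Jc] J_smult[OF Jc]] Jf1])
    have zd: "int p dvd (- l * c0 - B) \<and> int p dvd (c0 - l * c1 - A)" using linpoly[OF nC Jz[unfolded z_expl]] .
    have "tb0 l = - ((- l * c0 - B) + (c0 - l * c1 - A) * l)"
      unfolding tb0_def l_def by (simp add: algebra_simps power2_eq_square power3_eq_cube)
    moreover have "int p dvd - ((- l * c0 - B) + (c0 - l * c1 - A) * l)"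
      using zd by (intro dvd_minus_iff[THEN iffD2] dvd_add dvd_mult2) auto
    ultimately have d0: "int p dvd tb0 l" by simp
    have "int p dvd poly c' l" using J_van[OF Jc] d0 tb0_poly by simp
    hence pc: "int p dvd c0 + c1 * l + l^2" unfolding c'_def by (simp add: algebra_simps power2_eq_square)
    have "tb1 l = (c0 + c1 * l + l^2) - (c0 - l * c1 - A)"
      unfolding tb1_def l_def by (simp add: algebra_simps power2_eq_square)
    moreover have "int p dvd (c0 + c1 * l + l^2) - (c0 - l * c1 - A)" using pc zd by (metis dvd_diff)
    ultimately have d1: "int p dvd tb1 l" by simp
    obtain m where m: "c0 + c1 * l + l^2 = int p * m" using pc by (metis dvdE)
    have "[:-l,1:] * ([:-l,1:] + [:tb2 l:]) = c' - Polynomial.smult (int p) [:m:]"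
      unfolding c'_def using m
      by (intro poly_ext_int) (simp add: tb2_def l_def algebra_simps power2_eq_square)
    hence "Jm ([:-l,1:] * ([:-l,1:] + [:tb2 l:]))" using J_minus[OF Jc J_p] by metis
    thus False using L_final[OF _ d0 d1] nC by blast
  qed
  then obtain m2 where m2: "u2 = int p * m2" by (metis dvdE)
  have "[:u0, u1:] = u - Polynomial.smult (int p) [:0, 0, m2:]" unfolding ue m2 by simp
  hence J1: "Jm [:u0, u1:]" using J_minus[OF J J_p] by metis
  from linpoly[OF nC J1] have d01: "int p dvd u0" "int p dvd u1" by auto
  show ?thesis
  proof (cases "i < 3")
    case True
    hence "i = 0 \<or> i = 1 \<or> i = 2" by auto
    thus ?thesis using d01 d2 unfolding u0_def u1_def u2_def by auto
  next
    case False
    hence "coeff u i = 0" using du by (intro coeff_eq_0) simp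
    thus ?thesis by simp
  qed
qed

end


definition Gm :: "nat \<Rightarrow> rat poly set" where
  "Gm m = {g. degree g < 3 \<and> int_coeffs (Polynomial.smult (of_nat m) g)}"

lemma subgrp_Gm: "subgrp (Gm m)"
  unfolding subgrp_def Gm_def int_coeffs_def
  by (auto intro: deg_lt_diff simp: smult_diff_right right_diff_distrib Ints_diff)

lemma rep3_deg: "degree [:a, b, c::'a::zero:] < 3"
  by (rule le_less_trans[OF degree_pCons_le]) (auto intro: le_less_trans[OF degree_pCons_le])

lemma card_Gm:
  assumes m: "m > 0"
  shows "card (cs Kz ` Gm m) = m^3"
proof -
  define rep where "rep = (\<lambda>(i,j,l). [:of_nat i / of_nat m, of_nat j / of_nat m, of_nat l / of_nat m :: rat:])"
  define X where "X = {0..<m} \<times> {0..<m} \<times> {0..<m}"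
  have mq: "(of_nat m :: rat) \<noteq> 0" using m by simp
  have key: "cs Kz (rep x) = cs Kz (rep x') \<Longrightarrow> x \<in> X \<Longrightarrow> x' \<in> X \<Longrightarrow> x = x'" for x x'
  proof -
    assume e: "cs Kz (rep x) = cs Kz (rep x')" and xX: "x \<in> X" and xX': "x' \<in> X"
    obtain i j l where x: "x = (i,j,l)" by (cases x) auto
    obtain i' j' l' where x': "x' = (i',j',l')" by (cases x') auto
    have "rep x - rep x' \<in> Kz" using e cs_eq_iff[OF subgrp_Kz] by blast
    hence ic: "coeff (rep x - rep x') n \<in> \<int>" for n unfolding Kz_def int_coeffs_def by auto
    have eqn: "a = b" if "a < m" "b < m" "(of_nat a / of_nat m - of_nat b / of_nat m :: rat) \<in> \<int>" for a b :: nat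
    proof -
      from that(3) obtain t where "(of_nat a / of_nat m - of_nat b / of_nat m :: rat) = of_int t" by (meson Ints_cases)
      hence "(of_int (int a - int b) :: rat) = of_int (int m * t)" using mq by (simp add: field_simps)
      hence "int a - int b = int m * t" by (simp only: of_int_eq_iff)
      moreover have "\<bar>int a - int b\<bar> < int m" using that by auto
      ultimately have "int m * \<bar>t\<bar> < int m * 1" by (simp add: abs_mult)
      hence "\<bar>t\<bar> < 1" using m mult_less_cancel_left_pos[of "int m" "\<bar>t\<bar>" 1] by simp
      hence "t = 0" by simp
      thus "a = b" using \<open>int a - int b = int m * t\<close> by simp
    qed
    have "i = i'" using eqn[of i i'] ic[of 0] xX xX' unfolding x x' rep_def X_def by simp
    moreover have "j = j'" using eqn[of j j'] ic[of 1] xX xX' unfolding x x' rep_def X_def by simp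
    moreover have "l = l'" using eqn[of l l'] ic[of 2] xX xX' unfolding x x' rep_def X_def by (simp add: numeral_2_eq_2)
    ultimately show "x = x'" unfolding x x' by simp
  qed
  have img: "cs Kz ` Gm m = (\<lambda>x. cs Kz (rep x)) ` X"
  proof
    show "cs Kz ` Gm m \<subseteq> (\<lambda>x. cs Kz (rep x)) ` X"
    proof
      fix C assume "C \<in> cs Kz ` Gm m"
      then obtain g where g: "g \<in> Gm m" "C = cs Kz g" by auto
      have dg: "degree g < 3" and ig: "int_coeffs (Polynomial.smult (of_nat m) g)" using g unfolding Gm_def by auto
      have "\<exists>n. of_nat m * coeff g s = of_int n" for s
      proof -
        have "coeff (Polynomial.smult (of_nat m) g) s \<in> \<int>" using ig unfolding int_coeffs_def by blast
        then obtain n where "coeff (Polynomial.smult (of_nat m) g) s = of_int n" by (meson Ints_cases)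
        thus ?thesis by auto
      qed
      then obtain n where n: "of_nat m * coeff g s = of_int (n s)" for s by metis
      define r where "r s = nat (n s mod int m)" for s
      have r_lt: "r s < m" for s unfolding r_def using m by (simp add: nat_less_iff)
      have r_eq: "int (r s) = n s mod int m" for s unfolding r_def using m by simp
      define x where "x = (r 0, r 1, r 2)"
      have xX: "x \<in> X" unfolding x_def X_def using r_lt by auto
      have "g - rep x \<in> Kz"
      proof -
        have cdiff: "coeff g s - of_nat (r s) / of_nat m = of_int (n s div int m)" for s
        proof -
          have "coeff g s = of_int (n s) / of_nat m" using n[of s] mq by (simp add: field_simps)
          also have "n s = int m * (n s div int m) + int (r s)" unfolding r_eq by simp
          finally show ?thesis using mq by (simp add: field_simps)
        qed
        have "degree (g - rep x) < 3" using dg rep3_deg unfolding rep_def x_def by (auto intro: deg_lt_diff)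
        moreover have "coeff (g - rep x) s \<in> \<int>" for s
        proof (cases "s < 3")
          case True
          hence "s = 0 \<or> s = 1 \<or> s = 2" by auto
          thus ?thesis using cdiff unfolding rep_def x_def by (auto simp: numeral_2_eq_2)
        next
          case False
          hence "coeff (g - rep x) s = 0" using \<open>degree (g - rep x) < 3\<close> by (intro coeff_eq_0) simp
          thus ?thesis by simp
        qed
        ultimately show ?thesis unfolding Kz_def int_coeffs_def by auto
      qed
      hence "C = cs Kz (rep x)" using g cs_eq_iff[OF subgrp_Kz] by blast
      thus "C \<in> (\<lambda>x. cs Kz (rep x)) ` X" using xX by blast
    qed
    show "(\<lambda>x. cs Kz (rep x)) ` X \<subseteq> cs Kz ` Gm m"
    proof
      fix C assume "C \<in> (\<lambda>x. cs Kz (rep x)) ` X"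
      then obtain x where x: "x \<in> X" "C = cs Kz (rep x)" by auto
      have "rep x \<in> Gm m"
      proof -
        obtain i j l where "x = (i,j,l)" by (cases x) auto
        moreover have "int_coeffs (Polynomial.smult (of_nat m) [:of_nat i / of_nat m, of_nat j / of_nat m, of_nat l / of_nat m :: rat:])"
          unfolding int_coeffs_def using mq by (auto simp: coeff_pCons split: nat.splits)
        ultimately show ?thesis unfolding Gm_def rep_def using rep3_deg by auto
      qed
      thus "C \<in> cs Kz ` Gm m" using x by blast
    qed
  qed
  have "card (cs Kz ` Gm m) = card X" unfolding img
    by (rule card_image) (use key in \<open>auto intro: inj_onI\<close>)
  also have "card X = m^3" unfolding X_def by (simp add: card_cartesian_product power3_eq_cube)
  finally show ?thesis .
qed

lemma pow_split:
  fixes p D :: nat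
  assumes "prime p" "D > 0"
  shows "\<exists>e m. D = p^e * m \<and> \<not> p dvd m"
  using assms(2)
proof (induction D rule: less_induct)
  case (less D)
  show ?case
  proof (cases "p dvd D")
    case True
    then obtain D' where D': "D = p * D'" by (metis dvdE)
    have "D' < D" using D' less.prems prime_gt_1_nat[OF assms(1)] by simp
    moreover have "D' > 0" using D' less.prems by simp
    ultimately obtain e m where "D' = p^e * m" "\<not> p dvd m" using less.IH by blast
    hence "D = p^(Suc e) * m" using D' by simp
    thus ?thesis using \<open>\<not> p dvd m\<close> by blast
  next
    case False
    hence "D = p^0 * D" by simp
    thus ?thesis using False by blast
  qed
qed

context cubic_p
begin

lemma no_torsion:
  assumes nC: "\<forall>r. \<not> ((int p)^2 dvd tb0 r \<and> int p dvd tb1 r)"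
    and g: "g \<in> Ocl" and pg: "int_coeffs (Polynomial.smult (of_nat p) g)"
  shows "int_coeffs g"
proof -
  define h where "h = Polynomial.smult (of_nat p) g"
  define u where "u = map_poly floor h"
  have uh: "(of_int_poly u :: rat poly) = h"
  proof (rule poly_eqI)
    fix n
    have "coeff h n \<in> \<int>" using pg unfolding h_def int_coeffs_def by auto
    then obtain z where z: "coeff h n = of_int z" by (meson Ints_cases)
    show "coeff (of_int_poly u) n = coeff h n" unfolding u_def
      by (simp add: coeff_map_poly z)
  qed
  have dg: "degree g < 3" and ig: "inO g" using g unfolding Ocl_def by auto
  have du: "degree u < 3"
  proof -
    have "degree (of_int_poly u :: rat poly) = degree u" by simp
    moreover have "degree h < 3" unfolding h_def using dg by (meson degree_smult_le le_less_trans)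
    ultimately show ?thesis using uh by simp
  qed
  have Ju: "Jm u" unfolding Jm_def
  proof
    fix a assume a: "a \<in> {a1,a2,a3}"
    have "poly (of_int_poly u) a = ev h a" unfolding ev_def uh[symmetric] of_rat_of_int_poly ..
    also have "\<dots> = of_nat p * ev g a" unfolding h_def ev_smult by simp
    finally have "poly (of_int_poly u) a / of_nat p = ev g a" using p0 by simp
    thus "algebraic_int (poly (of_int_poly u) a / of_nat p)" using ig a unfolding inO_def by auto
  qed
  have "int p dvd coeff u i" for i using local_main[OF nC Ju du] .
  show "int_coeffs g" unfolding int_coeffs_def
  proof
    fix i
    obtain t where t: "coeff u i = int p * t" using \<open>int p dvd coeff u i\<close> by (metis dvdE)
    have "coeff h i = coeff (of_int_poly u) i" using uh by simp
    also have "\<dots> = of_int (int p * t)" using t by simp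
    finally have "coeff h i = of_int (int p * t)" .
    hence "of_nat p * coeff g i = of_nat p * of_int t" unfolding h_def by simp
    hence "coeff g i = of_int t" using p0 by simp
    thus "coeff g i \<in> \<int>" by simp
  qed
qed

lemma dir2:
  assumes nC: "\<forall>r. \<not> ((int p)^2 dvd tb0 r \<and> int p dvd tb1 r)"
    and disc: "cubic_disc k A B \<noteq> 0"
  shows "\<not> p dvd card (cs Kz ` Ocl)"
proof -
  define D where "D = nat \<bar>cubic_disc k A B\<bar>"
  have D0: "D > 0" using disc unfolding D_def by simp
  obtain e m where em: "D = p^e * m" "\<not> p dvd m" using pow_split[OF prime D0] by blast
  have m0: "m > 0" using em(1) D0 by (cases "m = 0") auto
  have OG: "Ocl \<subseteq> Gm m"
  proof
    fix g assume g: "g \<in> Ocl"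
    have ic: "int_coeffs (Polynomial.smult (of_nat D) g)" unfolding int_coeffs_def
    proof
      fix i
      show "coeff (Polynomial.smult (of_nat D) g) i \<in> \<int>"
      proof (cases "i < 3")
        case True
        have di: "of_int (cubic_disc k A B) * coeff g i \<in> \<int>" using disc_bound[OF g True] .
        have "(of_nat D :: rat) = of_int \<bar>cubic_disc k A B\<bar>" unfolding D_def by simp
        moreover have "of_int \<bar>cubic_disc k A B\<bar> * coeff g i \<in> \<int>"
        proof (cases "cubic_disc k A B \<ge> 0")
          case True thus ?thesis using di by simp
        next
          case False
          hence "of_int \<bar>cubic_disc k A B\<bar> * coeff g i = - (of_int (cubic_disc k A B) * coeff g i)" by simp
          thus ?thesis using di by (simp only: Ints_minus)
        qed
        ultimately show ?thesis by simp
      next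
        case False
        hence "coeff g i = 0" using g unfolding Ocl_def by (intro coeff_eq_0) auto
        thus ?thesis by simp
      qed
    qed
    have "int_coeffs (Polynomial.smult (of_nat m) g)" if "int_coeffs (Polynomial.smult (of_nat (p^j * m)) g)" for j
      using that
    proof (induction j)
      case 0 thus ?case by simp
    next
      case (Suc j)
      define h where "h = Polynomial.smult (of_nat (p^j * m)) g"
      have "h \<in> Ocl" unfolding h_def using g unfolding Ocl_def
        using inO_smult_int[of g "int (p^j * m)"] by (auto intro: le_less_trans[OF degree_smult_le])
      moreover have "int_coeffs (Polynomial.smult (of_nat p) h)" using Suc.prems unfolding h_def by (simp add: mult_ac)
      ultimately have "int_coeffs h" using no_torsion[OF nC] by blast
      thus ?case using Suc.IH unfolding h_def by simp
    qed
    hence "int_coeffs (Polynomial.smult (of_nat m) g)" using ic em(1) by simp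
    thus "g \<in> Gm m" using g unfolding Gm_def Ocl_def by auto
  qed
  have "card (cs Kz ` Ocl) dvd card (cs Kz ` Gm m)"
  proof (rule lagrange_generic[OF subgrp_Kz subgrp_Ocl subgrp_Gm Kz_Ocl OG])
    show "finite (cs Kz ` Gm m)" using card_Gm[OF m0] m0 by (intro card_ge_0_finite) simp
  qed
  hence "card (cs Kz ` Ocl) dvd m^3" using card_Gm[OF m0] by simp
  moreover have "\<not> p dvd m^3" using em(2) prime by (simp add: prime_dvd_power_iff)
  ultimately show ?thesis using dvd_trans by blast
qed

end


definition Cond :: "nat \<Rightarrow> int \<Rightarrow> int \<Rightarrow> int \<Rightarrow> bool" where
  "Cond p k A B \<longleftrightarrow> (\<exists>r. (int p)^2 dvd r^3 + k*r^2 + A*r + B \<and> int p dvd 3*r^2 + 2*k*r + A)"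

lemma ind_iff:
  fixes p :: nat and k A B :: int
  assumes p: "prime p" and disc: "cubic_disc k A B \<noteq> 0"
  shows "p dvd ind [:B, A, k, 1:] \<longleftrightarrow> Cond p k A B"
proof -
  obtain a1 a2 a3 :: complex where sp: "of_int_poly (cub k A B) = [:-a1,1:]*[:-a2,1:]*[:-a3,1:]"
    and v: "of_int k = -(a1+a2+a3)" "of_int A = a1*a2+a1*a3+a2*a3" "of_int B = -(a1*a2*a3)"
    by (rule cubic_split)
  have e: "of_int (cubic_disc k A B) = ((a1-a2)*(a1-a3)*(a2-a3))^2" by (rule disc_vieta[OF v])
  have "(of_int (cubic_disc k A B) :: complex) \<noteq> 0" using disc by simp
  hence "((a1-a2)*(a1-a3)*(a2-a3))^2 \<noteq> 0" unfolding e .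
  hence dist: "a1 \<noteq> a2" "a1 \<noteq> a3" "a2 \<noteq> a3" by auto
  interpret cp: cubic_p k A B a1 a2 a3 p
    by unfold_locales (use sp v dist p in auto)
  show ?thesis
  proof
    assume "p dvd ind [:B, A, k, 1:]"
    hence pd: "p dvd card (cs Kz ` cp.Ocl)" unfolding cp.ind_eq .
    show "Cond p k A B"
    proof (rule ccontr)
      assume "\<not> Cond p k A B"
      hence "\<forall>r. \<not> ((int p)^2 dvd cp.tb0 r \<and> int p dvd cp.tb1 r)"
        unfolding Cond_def cp.tb0_def cp.tb1_def by blast
      from cp.dir2[OF this disc] pd show False by simp
    qed
  next
    assume "Cond p k A B"
    then obtain r where r: "(int p)^2 dvd r^3 + k*r^2 + A*r + B" "int p dvd 3*r^2 + 2*k*r + A"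
      unfolding Cond_def by blast
    from cp.dir1[OF p r] show "p dvd ind [:B, A, k, 1:]" unfolding cp.ind_eq .
  qed
qed

lemma Cond_cong:
  assumes "[B = b] (mod int p ^ 2)"
  shows "Cond p k A B \<longleftrightarrow> Cond p k A b"
proof -
  have "(int p)^2 dvd B - b" using assms by (simp add: cong_iff_dvd_diff dvd_diff_commute)
  then obtain t where "B - b = (int p)^2 * t" by (elim dvdE)
  hence t: "B = b + (int p)^2 * t" by simp
  have "(int p)^2 dvd r^3 + k*r^2 + A*r + B \<longleftrightarrow> (int p)^2 dvd r^3 + k*r^2 + A*r + b" for r
  proof -
    have eq: "r^3 + k*r^2 + A*r + B = (r^3 + k*r^2 + A*r + b) + (int p)^2 * t" using t by simp
    show ?thesis unfolding eq by (rule dvd_add_left_iff) simp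
  qed
  thus ?thesis unfolding Cond_def by simp
qed

lemma disc_nonzero_lift:
  fixes s :: int
  assumes "s \<noteq> 0"
  shows "\<exists>j\<in>{0,1,2::int}. cubic_disc k A (b + j * s) \<noteq> 0"
proof (rule ccontr)
  assume "\<not> ?thesis"
  hence z: "cubic_disc k A b = 0" "cubic_disc k A (b + s) = 0" "cubic_disc k A (b + 2 * s) = 0" by auto
  have "cubic_disc k A b - 2 * cubic_disc k A (b + s) + cubic_disc k A (b + 2 * s) = -54 * s^2"
    unfolding cubic_disc_def by (simp add: algebra_simps power2_eq_square)
  thus False using z assms by simp
qed

lemma count_bij:
  fixes p :: nat and k A :: int
  assumes p: "prime p"
  shows "card {b \<in> {0..<int p ^ 2}. Cond p k A b} = card {x \<in> {0..<int p}. [3 * x^2 + 2 * k * x + A = 0] (mod int p)}"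
proof -
  define P where "P = int p"
  have P1: "P > 1" unfolding P_def using prime_gt_1_nat[OF p] by simp
  have pP: "prime P" unfolding P_def using p by simp
  define F where "F x = x^3 + k*x^2 + A*x" for x
  define \<phi> where "\<phi> x = (- F x) mod P^2" for x
  define R where "R = {x \<in> {0..<int p}. [3 * x^2 + 2 * k * x + A = 0] (mod int p)}"
  define L where "L = {b \<in> {0..<int p ^ 2}. Cond p k A b}"
  have R_alt: "x \<in> R \<longleftrightarrow> 0 \<le> x \<and> x < P \<and> P dvd 3*x^2 + 2*k*x + A" for x
    unfolding R_def P_def by (auto simp: cong_0_iff)
  have bij: "bij_betw \<phi> R L"
  proof (rule bij_betw_imageI)
    show "inj_on \<phi> R"
    proof (rule inj_onI)
      fix x x' assume x: "x \<in> R" and x': "x' \<in> R" and e: "\<phi> x = \<phi> x'"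
      have dx: "P dvd 3*x^2 + 2*k*x + A" and dx': "P dvd 3*x'^2 + 2*k*x' + A" using x x' R_alt by auto
      have "P^2 dvd (- F x) - (- F x')" using e unfolding \<phi>_def by (simp only: mod_eq_dvd_iff)
      moreover have "(- F x) - (- F x') = - (F x - F x')" by simp
      ultimately have "P^2 dvd F x - F x'" by (simp only: dvd_minus_iff)
      moreover have "P dvd P^2" by (simp add: power2_eq_square)
      ultimately have "P dvd F x - F x'" by (rule dvd_trans[rotated])
      define Q where "Q = x^2 + x*x' + x'^2 + k*(x+x') + A"
      have FQ: "F x - F x' = (x - x') * Q" unfolding F_def Q_def by (simp add: algebra_simps power2_eq_square power3_eq_cube)
      have "P dvd x - x'"
      proof (rule ccontr)
        assume nd: "\<not> P dvd x - x'"
        have "P dvd Q" using \<open>P dvd F x - F x'\<close> nd pP unfolding FQ by (simp add: prime_dvd_mult_iff)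
        have e1: "Q - (3*x^2 + 2*k*x + A) = (x' - x) * (x' + 2*x + k)" unfolding Q_def by (simp add: algebra_simps power2_eq_square)
        have e2: "Q - (3*x'^2 + 2*k*x' + A) = (x - x') * (x + 2*x' + k)" unfolding Q_def by (simp add: algebra_simps power2_eq_square)
        have nd': "\<not> P dvd x' - x" using nd by (simp add: dvd_diff_commute)
        have "P dvd (x' - x) * (x' + 2*x + k)" unfolding e1[symmetric] using \<open>P dvd Q\<close> dx by (rule dvd_diff)
        hence a: "P dvd x' + 2*x + k" using nd' pP by (simp add: prime_dvd_mult_iff)
        have "P dvd (x - x') * (x + 2*x' + k)" unfolding e2[symmetric] using \<open>P dvd Q\<close> dx' by (rule dvd_diff)
        hence b: "P dvd x + 2*x' + k" using nd pP by (simp add: prime_dvd_mult_iff)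
        have "P dvd (x' + 2*x + k) - (x + 2*x' + k)" using a b by (rule dvd_diff)
        moreover have "(x' + 2*x + k) - (x + 2*x' + k) = x - x'" by simp
        ultimately show False using nd by simp
      qed
      have bx: "0 \<le> x \<and> x < P" using x R_alt by blast
      have bx': "0 \<le> x' \<and> x' < P" using x' R_alt by blast
      have m: "x mod P = x' mod P" by (rule iffD2[OF mod_eq_dvd_iff \<open>P dvd x - x'\<close>])
      have "x = x mod P" using bx by (simp add: mod_pos_pos_trivial)
      also have "\<dots> = x' mod P" by (rule m)
      also have "\<dots> = x'" using bx' by (simp add: mod_pos_pos_trivial)
      finally show "x = x'" .
    qed
    show "\<phi> ` R = L"
    proof
      show "\<phi> ` R \<subseteq> L"
      proof
        fix b assume "b \<in> \<phi> ` R"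
        then obtain x where x: "x \<in> R" "b = \<phi> x" by auto
        have "0 \<le> b" "b < P^2" unfolding x(2) \<phi>_def using P1 by auto
        moreover have "Cond p k A b" unfolding Cond_def
        proof (intro exI conjI)
          have "P^2 dvd ((- F x) mod P^2) - (- F x)" by (subst mod_eq_dvd_iff[symmetric]) simp
          thus "(int p)^2 dvd x^3 + k*x^2 + A*x + b" unfolding x(2) \<phi>_def P_def[symmetric] F_def
            by (simp add: algebra_simps)
          show "int p dvd 3*x^2 + 2*k*x + A" using x R_alt unfolding P_def by auto
        qed
        ultimately show "b \<in> L" unfolding L_def P_def by auto
      qed
      show "L \<subseteq> \<phi> ` R"
      proof
        fix b assume "b \<in> L"
        hence b: "0 \<le> b" "b < P^2" "Cond p k A b" unfolding L_def P_def by auto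
        then obtain r where r: "P^2 dvd F r + b" "P dvd 3*r^2 + 2*k*r + A" unfolding Cond_def F_def P_def by auto
        define x where "x = r mod P"
        define t where "t = r div P"
        have t: "r = x + P * t" unfolding x_def t_def using mod_mult_div_eq[of r P] by simp
        have x0: "0 \<le> x" "x < P" unfolding x_def using P1 by auto
        have eqn: "3*r^2 + 2*k*r + A = (3*x^2 + 2*k*x + A) + P * (t * (6*x + 3*P*t + 2*k))"
          unfolding t by (simp add: algebra_simps power2_eq_square)
        have "P dvd (3*x^2 + 2*k*x + A) + P * (t * (6*x + 3*P*t + 2*k))" using r(2) unfolding eqn .
        hence "P dvd ((3*x^2 + 2*k*x + A) + P * (t * (6*x + 3*P*t + 2*k))) - P * (t * (6*x + 3*P*t + 2*k))"
          by (rule dvd_diff) simp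
        hence dx: "P dvd 3*x^2 + 2*k*x + A" by simp
        hence xR: "x \<in> R" using x0 R_alt by auto
        have "F r - F x = P^2 * t * (t * (3*x + P*t + k)) + P * t * (3*x^2 + 2*k*x + A)"
          unfolding F_def t by (simp add: algebra_simps power2_eq_square power3_eq_cube)
        moreover have "P^2 dvd P * t * (3*x^2 + 2*k*x + A)"
        proof -
          obtain w where "3*x^2 + 2*k*x + A = P * w" using dx by (elim dvdE)
          hence "P * t * (3*x^2 + 2*k*x + A) = P^2 * (t * w)" by (simp add: power2_eq_square mult_ac)
          thus ?thesis by (rule dvdI)
        qed
        ultimately have "P^2 dvd F r - F x" by (simp add: dvd_add)
        hence "P^2 dvd (F r + b) - (F r - F x)" using r(1) by (rule dvd_diff[rotated])
        hence "P^2 dvd b - (- F x)" by (simp add: algebra_simps)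
        hence "b mod P^2 = (- F x) mod P^2" by (simp add: mod_eq_dvd_iff)
        hence "b = \<phi> x" unfolding \<phi>_def using b by simp
        thus "b \<in> \<phi> ` R" using xR by blast
      qed
    qed
  qed
  show ?thesis using bij_betw_same_card[OF bij] unfolding L_def R_def by simp
qed

theorem corollary3:
  fixes p :: nat and k A :: int
  assumes "prime p"
  shows "card {b \<in> {0..<int p ^ 2}. \<forall>B::int. [B = b] (mod int p ^ 2) \<and> cubic_disc k A B \<noteq> 0
                 \<longrightarrow> p dvd ind [:B, A, k, 1:]}
       = card {x \<in> {0..<int p}. [3 * x^2 + 2 * k * x + A = 0] (mod int p)}"
proof -
  have "{b \<in> {0..<int p ^ 2}. \<forall>B::int. [B = b] (mod int p ^ 2) \<and> cubic_disc k A B \<noteq> 0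
                 \<longrightarrow> p dvd ind [:B, A, k, 1:]} = {b \<in> {0..<int p ^ 2}. Cond p k A b}"
  proof (intro Collect_cong conj_cong refl iffI)
    fix b assume all: "\<forall>B::int. [B = b] (mod int p ^ 2) \<and> cubic_disc k A B \<noteq> 0 \<longrightarrow> p dvd ind [:B, A, k, 1:]"
    have s0: "int p ^ 2 \<noteq> 0" using assms by (simp add: prime_gt_0_nat)
    obtain j where j: "j \<in> {0,1,2::int}" "cubic_disc k A (b + j * int p ^ 2) \<noteq> 0"
      using disc_nonzero_lift[OF s0] by blast
    define B where "B = b + j * int p ^ 2"
    have cB: "[B = b] (mod int p ^ 2)" unfolding B_def by (simp add: cong_iff_dvd_diff)
    have "p dvd ind [:B, A, k, 1:]" using all cB j(2) unfolding B_def by blast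
    hence "Cond p k A B" using ind_iff[OF assms] j(2) unfolding B_def by blast
    thus "Cond p k A b" using Cond_cong[OF cB] by simp
  next
    fix b assume c: "Cond p k A b"
    show "\<forall>B::int. [B = b] (mod int p ^ 2) \<and> cubic_disc k A B \<noteq> 0 \<longrightarrow> p dvd ind [:B, A, k, 1:]"
    proof (intro allI impI, elim conjE)
      fix B assume cB: "[B = b] (mod int p ^ 2)" and d: "cubic_disc k A B \<noteq> 0"
      have "Cond p k A B" using Cond_cong[OF cB] c by simp
      thus "p dvd ind [:B, A, k, 1:]" using ind_iff[OF assms d] by simp
    qed
  qed
  thus ?thesis using count_bij[OF assms] by simp
qed

end
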